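(* Let $n=2$, $S=K[x,y]$, $\mathbf t,\mathbf k\in\mathbb N^2$ with $\mathbf 1\le\mathbf k\le\mathbf t+\mathbf 1$, and let $I$ be a positively $\mathbf t$-determined monomial ideal. Then $H^2\mathcal N^{\mathbf k}_{\mathbf t}(S/I)=0$ if and only if $(S/I)_{\mathbf t+\mathbf 1-\mathbf k}=0$.
   Context: $K$ a field, $S$ is $\mathbb Z^2$-graded with $\deg x=\varepsilon_1$, $\deg y=\varepsilon_2$; $\mathbf 1=(1,1)$; componentwise order; $M(\mathbf a)_{\mathbf r}=M_{\mathbf a+\mathbf r}$. A monomial ideal $I$ is positively $\mathbf t$-determined if each minimal generator $x^{a_1}y^{a_2}$ has $\mathbf a\le\mathbf t$; an $\mathbb N^2$-graded module is positively $\mathbf t$-determined if multiplication by the $i$-th variable $M_{\mathbf a}\to M_{\mathbf a+\varepsilon_i}$ is bijective whenever $a_i\ge t_i$. For order-preserving $q:\mathbb N^2\to\mathbb Z^2$, $(q^*M)_{\mathbf a}=M_{q(\mathbf a)}$ with monomials of degree $\mathbf b$ acting via the monomial of degree $q(\mathbf a+\mathbf b)-q(\mathbf a)$; $p_{\mathbf t}(\mathbf a)=(\min(a_i,t_i))_i$. Chain complexes, $H^iC=H_{-i}C$. Nakayama functor: $P_{t\varepsilon_j}$ is the complex $x_j^tS\hookrightarrow S$ ($S$ in degree $0$, $x_1=x,x_2=y$); for $\mathbf k\in\{0,1\}^2$, $P^{\mathbf k}_{\mathbf t}=\bigotimes_jP_{t_j\varepsilon_j}^{\otimes k_j}$ and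 $\mathcal N^{\mathbf k}_{\mathbf t}(C)=p_{\mathbf t}^*\underline{\operatorname{Hom}}_S(P^{\mathbf k}_{\mathbf t+\mathbf 1},C(-\mathbf k))$; for $\mathbf k\in\mathbb N^2$, $\mathcal N^{\mathbf k}_{\mathbf t}=(\mathcal N^{\varepsilon_1}_{\mathbf t})^{\circ k_1}\circ(\mathcal N^{\varepsilon_2}_{\mathbf t})^{\circ k_2}$. *)

theory Defs
  imports "Jordan_Normal_Form.Matrix"
begin

text \<open>Z^2-graded chain complexes of graded K[x,y]-modules with finite-dimensional
homogeneous pieces, written in coordinates.  For homological degree m and multidegree a,
gdim C m a is the K-dimension of (C_m)_a; gdif C m a is the matrix of the differential
(C_m)_a to (C_(m-1))_a; gx C m a (resp. gy C m a) is the matrix of multiplication by x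
(resp. y), from (C_m)_a to (C_m)_(a+e1) (resp. (C_m)_(a+e2)).\<close>

type_synonym mdeg = "int \<times> int"

record 'k gcx =
  gdim :: "int \<Rightarrow> mdeg \<Rightarrow> nat"
  gdif :: "int \<Rightarrow> mdeg \<Rightarrow> 'k mat"
  gx   :: "int \<Rightarrow> mdeg \<Rightarrow> 'k mat"
  gy   :: "int \<Rightarrow> mdeg \<Rightarrow> 'k mat"

definition mv :: "nat \<Rightarrow> mdeg \<Rightarrow> int \<Rightarrow> mdeg" where
  "mv j a c = (if j = 1 then (fst a + c, snd a) else (fst a, snd a + c))"

definition gact :: "'k gcx \<Rightarrow> nat \<Rightarrow> int \<Rightarrow> mdeg \<Rightarrow> 'k mat" where
  "gact C j = (if j = 1 then gx C else gy C)"

fun gactpow :: "('k::semiring_1) gcx \<Rightarrow> nat \<Rightarrow> nat \<Rightarrow> int \<Rightarrow> mdeg \<Rightarrow> 'k mat" where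
  "gactpow C j 0 m a = 1\<^sub>m (gdim C m a)"
| "gactpow C j (Suc n) m a = gact C j m (mv j a (int n)) * gactpow C j n m a"

text \<open>Monomial ideals of K[x,y], represented by their sets of exponents (up-closed subsets of N^2).\<close>

definition le2 :: "nat \<times> nat \<Rightarrow> nat \<times> nat \<Rightarrow> bool" where
  "le2 a b \<longleftrightarrow> fst a \<le> fst b \<and> snd a \<le> snd b"

definition monomial_ideal_exps :: "(nat \<times> nat) set \<Rightarrow> bool" where
  "monomial_ideal_exps E \<longleftrightarrow> (\<forall>a\<in>E. \<forall>b. le2 a b \<longrightarrow> b \<in> E)"

definition min_gens :: "(nat \<times> nat) set \<Rightarrow> (nat \<times> nat) set" where
  "min_gens E = {a \<in> E. \<forall>b\<in>E. le2 b a \<longrightarrow> b = a}"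

definition pos_t_determined_ideal :: "nat \<times> nat \<Rightarrow> (nat \<times> nat) set \<Rightarrow> bool" where
  "pos_t_determined_ideal t E \<longleftrightarrow> monomial_ideal_exps E \<and> (\<forall>a\<in>min_gens E. le2 a t)"

text \<open>S/I as a complex concentrated in homological degree 0\<close>
definition in_quot :: "(nat \<times> nat) set \<Rightarrow> mdeg \<Rightarrow> bool" where
  "in_quot E a \<longleftrightarrow> 0 \<le> fst a \<and> 0 \<le> snd a \<and> (nat (fst a), nat (snd a)) \<notin> E"

definition qdim :: "(nat \<times> nat) set \<Rightarrow> int \<Rightarrow> mdeg \<Rightarrow> nat" where
  "qdim E m a = (if m = 0 \<and> in_quot E a then 1 else 0)"

definition qact :: "(nat \<times> nat) set \<Rightarrow> nat \<Rightarrow> int \<Rightarrow> mdeg \<Rightarrow> 'k::semiring_1 mat" where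
  "qact E j m a = (if m = 0 \<and> in_quot E a \<and> in_quot E (mv j a 1) then 1\<^sub>m 1
                   else 0\<^sub>m (qdim E m (mv j a 1)) (qdim E m a))"

definition quot_cx :: "(nat \<times> nat) set \<Rightarrow> 'k::semiring_1 gcx" where
  "quot_cx E = \<lparr> gdim = qdim E,
                 gdif = (\<lambda>m a. 0\<^sub>m (qdim E (m - 1) a) (qdim E m a)),
                 gx = qact E 1, gy = qact E 2 \<rparr>"

definition twist :: "'k gcx \<Rightarrow> nat \<Rightarrow> int \<Rightarrow> 'k gcx" where
  "twist C j c = \<lparr> gdim = (\<lambda>m a. gdim C m (mv j a c)),
                   gdif = (\<lambda>m a. gdif C m (mv j a c)),
                   gx = (\<lambda>m a. gx C m (mv j a c)),
                   gy = (\<lambda>m a. gy C m (mv j a c)) \<rparr>"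

text \<open>Internal Hom complex Hom_S(P, D), P = (x_j^s S \<hookrightarrow> S), S in homological degree 0.
 Hom(P,D)_m = Hom_S(S, D_m) \<oplus> Hom_S(x_j^s S, D_(m+1)); using the canonical identifications
 Hom_S(S,M) = M and Hom_S(x_j^s S, M) = M(s e_j) (f \<mapsto> f(x_j^s)), the degree-a piece is
 (D_m)_a \<oplus> (D_(m+1))_(a + s e_j), and the Hom differential df = d\<circ>f - (-1)^m f\<circ>d_P is
 (u,v) \<mapsto> (d u, d v - (-1)^m x_j^s u).\<close>
definition homP :: "'k::comm_ring_1 gcx \<Rightarrow> nat \<Rightarrow> nat \<Rightarrow> 'k gcx" where
  "homP D j s =
    (let hd = (\<lambda>m a. gdim D m a + gdim D (m + 1) (mv j a (int s)));
         ha = (\<lambda>i m a. four_block_mat (gact D i m a)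
                   (0\<^sub>m (gdim D m (mv i a 1)) (gdim D (m + 1) (mv j a (int s))))
                   (0\<^sub>m (gdim D (m + 1) (mv i (mv j a (int s)) 1)) (gdim D m a))
                   (gact D i (m + 1) (mv j a (int s))))
     in \<lparr> gdim = hd,
          gdif = (\<lambda>m a. four_block_mat (gdif D m a)
                   (0\<^sub>m (gdim D (m - 1) a) (gdim D (m + 1) (mv j a (int s))))
                   (if even m then - gactpow D j s m a else gactpow D j s m a)
                   (gdif D (m + 1) (mv j a (int s)))),
          gx = ha 1, gy = ha 2 \<rparr>)"

text \<open>p_t(a) = (min(a_i, t_i))_i and the pullback p_t^*, an N^2-graded module
 (viewed as Z^2-graded, zero outside N^2).\<close>
definition ptrunc :: "nat \<times> nat \<Rightarrow> mdeg \<Rightarrow> mdeg" where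
  "ptrunc t a = (min (fst a) (int (fst t)), min (snd a) (int (snd t)))"

definition nonneg :: "mdeg \<Rightarrow> bool" where
  "nonneg a \<longleftrightarrow> 0 \<le> fst a \<and> 0 \<le> snd a"

definition tcomp :: "nat \<times> nat \<Rightarrow> nat \<Rightarrow> nat" where
  "tcomp t j = (if j = 1 then fst t else snd t)"

definition acomp :: "mdeg \<Rightarrow> nat \<Rightarrow> int" where
  "acomp a j = (if j = 1 then fst a else snd a)"

definition pull :: "nat \<times> nat \<Rightarrow> 'k::semiring_1 gcx \<Rightarrow> 'k gcx" where
  "pull t C =
    (let pd = (\<lambda>m a. if nonneg a then gdim C m (ptrunc t a) else 0);
         pa = (\<lambda>j m a. if nonneg a then
                  (if acomp a j \<ge> int (tcomp t j) then 1\<^sub>m (gdim C m (ptrunc t a))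
                   else gact C j m (ptrunc t a))
                else 0\<^sub>m (pd m (mv j a 1)) 0)
     in \<lparr> gdim = pd,
          gdif = (\<lambda>m a. if nonneg a then gdif C m (ptrunc t a) else 0\<^sub>m 0 0),
          gx = pa 1, gy = pa 2 \<rparr>)"

definition nak1 :: "nat \<times> nat \<Rightarrow> nat \<Rightarrow> 'k::comm_ring_1 gcx \<Rightarrow> 'k gcx" where
  "nak1 t j C = pull t (homP (twist C j (-1)) j (tcomp t j + 1))"

definition nak :: "nat \<times> nat \<Rightarrow> nat \<times> nat \<Rightarrow> 'k::comm_ring_1 gcx \<Rightarrow> 'k gcx" where
  "nak t k C = ((nak1 t 1) ^^ fst k) (((nak1 t 2) ^^ snd k) C)"

definition homology_zero :: "'k::field gcx \<Rightarrow> int \<Rightarrow> bool" where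
  "homology_zero C m \<longleftrightarrow> (\<forall>a.
     {v \<in> carrier_vec (gdim C m a). gdif C m a *\<^sub>v v = 0\<^sub>v (gdim C (m - 1) a)}
     \<subseteq> {gdif C (m + 1) a *\<^sub>v w | w. w \<in> carrier_vec (gdim C (m + 1) a)})"

definition cohomology_zero :: "'k::field gcx \<Rightarrow> int \<Rightarrow> bool" where
  "cohomology_zero C i \<longleftrightarrow> homology_zero C (- i)"

end

theory Submission
  imports Defs
begin


fun allw :: "nat \<Rightarrow> bool list list" where
  "allw 0 = [[]]"
| "allw (Suc n) = map (Cons False) (allw n) @ map (Cons True) (allw n)"

lemma set_allw: "set (allw n) = {w. length w = n}"
proof (induction n)
  case 0 then show ?case by auto
next
  case (Suc n)
  show ?case
  proof (intro Set.set_eqI iffI)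
    fix w :: "bool list" assume "w \<in> set (allw (Suc n))" then show "w \<in> {w. length w = Suc n}" using Suc by auto
  next
    fix w :: "bool list" assume "w \<in> {w. length w = Suc n}"
    then obtain b x where "w = b # x" "length x = n" by (cases w) auto
    then show "w \<in> set (allw (Suc n))" using Suc by (cases b) auto
  qed
qed

lemma distinct_allw: "distinct (allw n)"
  by (induction n) (auto simp: distinct_map inj_on_def)

definition tp :: "bool list \<Rightarrow> nat set" where "tp w = {p. p < length w \<and> w ! p}"
definition cnt :: "bool list \<Rightarrow> nat" where "cnt w = card (tp w)"

lemma finite_tp[simp]: "finite (tp w)" unfolding tp_def by auto

lemma tp_Cons: "tp (b # w) = (if b then {0} else {}) \<union> Suc ` tp w"
proof (rule Set.set_eqI)
  fix x show "x \<in> tp (b # w) \<longleftrightarrow> x \<in> (if b then {0} else {}) \<union> Suc ` tp w"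
    unfolding tp_def by (cases x) (auto simp: image_iff)
qed

lemma cnt_Cons[simp]: "cnt (b # w) = (if b then 1 else 0) + cnt w"
proof -
  have "card (Suc ` tp w) = card (tp w)" by (simp add: card_image)
  moreover have "0 \<notin> Suc ` tp w" by auto
  ultimately show ?thesis unfolding cnt_def tp_Cons by auto
qed

definition LL :: "nat \<Rightarrow> (mdeg \<Rightarrow> bool list \<Rightarrow> bool) \<Rightarrow> int \<Rightarrow> mdeg \<Rightarrow> bool list list" where
  "LL n P m a = filter (\<lambda>w. P a w \<and> - int (cnt w) = m) (allw n)"

lemma set_LL: "set (LL n P m a) = {w. length w = n \<and> P a w \<and> - int (cnt w) = m}"
  unfolding LL_def using set_allw by auto

lemma distinct_LL[simp]: "distinct (LL n P m a)"
  unfolding LL_def using distinct_allw by simp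

lemma LL_Suc: "LL (Suc n) P m a = map (Cons False) (LL n (\<lambda>a w. P a (False # w)) m a)
   @ map (Cons True) (LL n (\<lambda>a w. P a (True # w)) (m + 1) a)"
  unfolding LL_def by (auto simp: filter_map o_def intro!: filter_cong)

lemma LL_cong: "(\<And>w. length w = n \<Longrightarrow> P a w = Q b w) \<Longrightarrow> LL n P m a = LL n Q m b"
  unfolding LL_def using set_allw by (auto intro!: filter_cong)

fun dcoef :: "bool list \<Rightarrow> bool list \<Rightarrow> 'k::comm_ring_1" where
  "dcoef (b' # w') (b # w) = (if b = b' then dcoef w' w
      else if \<not> b \<and> b' \<and> w' = w then - ((-1) ^ cnt w) else 0)"
| "dcoef _ _ = 0"

definition mk :: "('a \<Rightarrow> 'a \<Rightarrow> 'k) \<Rightarrow> 'a list \<Rightarrow> 'a list \<Rightarrow> 'k mat" where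
  "mk g R C = mat (length R) (length C) (\<lambda>(r,s). g (R!r) (C!s))"

definition pid :: "'a \<Rightarrow> 'a \<Rightarrow> 'k::zero_neq_one" where "pid x y = (if x = y then 1 else 0)"

definition cm :: "nat \<Rightarrow> (mdeg \<Rightarrow> bool list \<Rightarrow> bool) \<Rightarrow> 'k::comm_ring_1 gcx" where
  "cm n P = \<lparr> gdim = (\<lambda>m a. length (LL n P m a)),
    gdif = (\<lambda>m a. mk dcoef (LL n P (m - 1) a) (LL n P m a)),
    gx = (\<lambda>m a. mk pid (LL n P m (mv 1 a 1)) (LL n P m a)),
    gy = (\<lambda>m a. mk pid (LL n P m (mv 2 a 1)) (LL n P m a)) \<rparr>"

lemma cm_simps[simp]:
  "gdim (cm n P) m a = length (LL n P m a)"
  "gdif (cm n P) m a = mk dcoef (LL n P (m - 1) a) (LL n P m a)"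
  "gx (cm n P) m a = mk pid (LL n P m (mv 1 a 1)) (LL n P m a)"
  "gy (cm n P) m a = mk pid (LL n P m (mv 2 a 1)) (LL n P m a)"
  by (simp_all add: cm_def)

lemma mk_dims[simp]: "dim_row (mk g R C) = length R" "dim_col (mk g R C) = length C"
  by (simp_all add: mk_def)

lemma mk_index[simp]: "r < length R \<Longrightarrow> s < length C \<Longrightarrow> mk g R C $$ (r,s) = g (R!r) (C!s)"
  by (simp add: mk_def)

lemma mk_append: "four_block_mat (mk g R1 C1) (mk g R1 C2) (mk g R2 C1) (mk g R2 C2) = mk g (R1 @ R2) (C1 @ C2)"
  by (rule eq_matI) (auto simp: index_mat_four_block nth_append)

lemma mk_map: "mk g (map f R) (map h C) = mk (\<lambda>x y. g (f x) (h y)) R C"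
  by (rule eq_matI) auto

lemma mk_zero: "(\<And>x y. g x y = 0) \<Longrightarrow> mk g R C = 0\<^sub>m (length R) (length C)"
  by (rule eq_matI) auto

lemma mk_pid_id: "distinct L \<Longrightarrow> mk pid L L = 1\<^sub>m (length L)"
  by (rule eq_matI) (auto simp: pid_def nth_eq_iff_index_eq)

lemma sum_pid: "distinct B \<Longrightarrow> (\<Sum>k = 0..<length B. pid x (B!k) * pid (B!k) y) =
   (if x = y \<and> x \<in> set B then (1::'k::comm_ring_1) else 0)"
proof -
  assume d: "distinct B"
  have "(\<Sum>k = 0..<length B. pid x (B!k) * pid (B!k) y) = sum_list (map (\<lambda>b. pid x b * pid b y :: 'k) B)"
    by (simp add: sum_list_sum_nth)
  also have "\<dots> = (\<Sum>b\<in>set B. pid x b * pid b y :: 'k)" using d by (simp add: sum_list_distinct_conv_sum_set)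
  also have "\<dots> = (\<Sum>b\<in>set B. if b = x then pid x y else 0 :: 'k)"
    by (rule sum.cong) (auto simp: pid_def)
  also have "\<dots> = (if x \<in> set B then pid x y else 0 :: 'k)" by simp
  finally show ?thesis by (simp add: pid_def)
qed

lemma mk_pid_mult: "distinct B \<Longrightarrow> (\<And>x. x \<in> set A \<Longrightarrow> x \<in> set C \<Longrightarrow> x \<in> set B) \<Longrightarrow>
   mk pid A B * mk pid B C = (mk pid A C :: 'k::comm_ring_1 mat)"
proof (rule eq_matI)
  fix i j assume d: "distinct B" and h: "\<And>x. x \<in> set A \<Longrightarrow> x \<in> set C \<Longrightarrow> x \<in> set B"
    and i: "i < dim_row (mk pid A C :: 'k mat)" and j: "j < dim_col (mk pid A C :: 'k mat)"
  have "(mk pid A B * mk pid B C) $$ (i, j) = (\<Sum>k = 0..<length B. pid (A!i) (B!k) * pid (B!k) (C!j) :: 'k)"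
    using i j by (simp add: scalar_prod_def row_def col_def)
  also have "\<dots> = (if A!i = C!j \<and> A!i \<in> set B then 1 else 0)" using d by (rule sum_pid)
  also have "\<dots> = pid (A!i) (C!j)" using h[of "A!i"] i j by (auto simp: pid_def)
  also have "\<dots> = (mk pid A C :: 'k mat) $$ (i, j)" using i j by simp
  finally show "(mk pid A B * mk pid B C) $$ (i, j) = (mk pid A C :: 'k mat) $$ (i, j)" .
qed auto

lemma mv_mv: "mv j (mv j a x) y = mv j a (x + y)"
  by (simp add: mv_def)
lemma mv_comm: "mv i (mv j a x) y = mv j (mv i a y) x"
  by (simp add: mv_def)
lemma mv_0[simp]: "mv j a 0 = a"
  by (simp add: mv_def)

lemma twist_cm: "twist (cm n P) j c = cm n (\<lambda>a. P (mv j a c))"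
  by (auto simp: twist_def cm_def LL_def mv_comm intro!: gcx.equality)

lemma gact_cm: "gact (cm n P) i m a = mk pid (LL n P m (mv i a 1)) (LL n P m a)"
  by (auto simp: gact_def mv_def)

definition convex_dir :: "nat \<Rightarrow> (mdeg \<Rightarrow> bool list \<Rightarrow> bool) \<Rightarrow> bool" where
  "convex_dir j P \<longleftrightarrow> (\<forall>a w s i. P a w \<longrightarrow> P (mv j a (int s)) w \<longrightarrow> i \<le> s \<longrightarrow> P (mv j a (int i)) w)"

lemma gactpow_cm: assumes "convex_dir j P"
  shows "gactpow (cm n P :: 'k::comm_ring_1 gcx) j s m a = mk pid (LL n P m (mv j a (int s))) (LL n P m a)"
proof (induction s)
  case 0 then show ?case by (simp add: mk_pid_id)
next
  case (Suc s)
  have "gactpow (cm n P :: 'k gcx) j (Suc s) m a =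
     mk pid (LL n P m (mv j a (int (Suc s)))) (LL n P m (mv j a (int s))) * mk pid (LL n P m (mv j a (int s))) (LL n P m a)"
    using Suc by (simp add: gact_cm mv_mv add.commute)
  also have "\<dots> = mk pid (LL n P m (mv j a (int (Suc s)))) (LL n P m a)"
  proof (rule mk_pid_mult)
    fix x assume "x \<in> set (LL n P m (mv j a (int (Suc s))))" "x \<in> set (LL n P m a)"
    then show "x \<in> set (LL n P m (mv j a (int s)))"
      using assms unfolding convex_dir_def set_LL by (metis (mono_tags, lifting) le_add2 mem_Collect_eq plus_1_eq_Suc)
  qed simp
  finally show ?case .
qed

lemma convex_shift: "convex_dir j P \<Longrightarrow> convex_dir j (\<lambda>a. P (mv j a c))"
  unfolding convex_dir_def by (metis mv_comm)


definition homPP :: "nat \<Rightarrow> nat \<Rightarrow> (mdeg \<Rightarrow> bool list \<Rightarrow> bool) \<Rightarrow> mdeg \<Rightarrow> bool list \<Rightarrow> bool" where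
  "homPP j s Q a w = (case w of [] \<Rightarrow> False | b # x \<Rightarrow> if b then Q (mv j a (int s)) x else Q a x)"

lemma LL_homPP: "LL (Suc n) (homPP j s Q) m a =
   map (Cons False) (LL n Q m a) @ map (Cons True) (LL n Q (m+1) (mv j a (int s)))"
  by (simp add: LL_Suc homPP_def) (simp add: LL_def)

lemma mk_dcoef_diag: "mk dcoef (map (Cons b) U) (map (Cons b) V) = (mk dcoef U V :: 'k::comm_ring_1 mat)"
  by (simp add: mk_map)

lemma mk_dcoef_12: "mk dcoef (map (Cons False) U) (map (Cons True) V) = (0\<^sub>m (length U) (length V) :: 'k::comm_ring_1 mat)"
  by (simp add: mk_map mk_zero)

lemma mk_dcoef_21: assumes "\<forall>y\<in>set U0. - int (cnt y) = m"
  shows "mk dcoef (map (Cons True) V) (map (Cons False) U0) =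
    (if even m then - mk pid V U0 else (mk pid V U0 :: 'k::comm_ring_1 mat))"
proof (rule eq_matI)
  fix i j assume i: "i < dim_row (if even m then - mk pid V U0 else (mk pid V U0 :: 'k mat))"
    and j: "j < dim_col (if even m then - mk pid V U0 else (mk pid V U0 :: 'k mat))"
  then have i': "i < length V" and j': "j < length U0" by (auto split: if_splits)
  have c: "- int (cnt (U0!j)) = m" using assms j' by auto
  have ev: "even m \<longleftrightarrow> even (cnt (U0!j))" using c by (metis even_minus even_of_nat)
  show "mk dcoef (map (Cons True) V) (map (Cons False) U0) $$ (i, j) =
    (if even m then - mk pid V U0 else (mk pid V U0 :: 'k mat)) $$ (i, j)"
    using i' j' ev by (auto simp: pid_def)
qed auto

lemma mk_pid_diag: "mk pid (map (Cons b) U) (map (Cons b) V) = (mk pid U V :: 'k::zero_neq_one mat)"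
proof -
  have "(\<lambda>x y. pid (b#x) (b#y) :: 'k) = pid" by (auto simp: pid_def fun_eq_iff)
  then show ?thesis by (simp add: mk_map)
qed

lemma mk_pid_off: "b \<noteq> c \<Longrightarrow> mk pid (map (Cons b) U) (map (Cons c) V) = (0\<^sub>m (length U) (length V) :: 'k::zero_neq_one mat)"
  by (simp add: mk_map mk_zero pid_def)

lemma homP_cm: assumes cv: "convex_dir j Q"
  shows "homP (cm n Q :: 'k::comm_ring_1 gcx) j s = cm (Suc n) (homPP j s Q)"
proof (rule gcx.equality)
  show "gdim (homP (cm n Q :: 'k gcx) j s) = gdim (cm (Suc n) (homPP j s Q) :: 'k gcx)"
    by (rule ext, rule ext) (simp add: homP_def Let_def LL_homPP)
  show "gdif (homP (cm n Q :: 'k gcx) j s) = gdif (cm (Suc n) (homPP j s Q) :: 'k gcx)"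
  proof (rule ext, rule ext)
    fix m a
    let ?b = "mv j a (int s)"
    have U0: "\<forall>y\<in>set (LL n Q m a). - int (cnt y) = m" by (simp add: set_LL)
    have "gdif (cm (Suc n) (homPP j s Q) :: 'k gcx) m a =
      mk dcoef (map (Cons False) (LL n Q (m - 1) a) @ map (Cons True) (LL n Q m ?b))
               (map (Cons False) (LL n Q m a) @ map (Cons True) (LL n Q (m+1) ?b))"
      by (simp add: LL_homPP)
    also have "\<dots> = four_block_mat (mk dcoef (LL n Q (m - 1) a) (LL n Q m a))
        (0\<^sub>m (length (LL n Q (m - 1) a)) (length (LL n Q (m+1) ?b)))
        (if even m then - mk pid (LL n Q m ?b) (LL n Q m a) else mk pid (LL n Q m ?b) (LL n Q m a))
        (mk dcoef (LL n Q m ?b) (LL n Q (m+1) ?b))"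
      by (simp only: mk_append[symmetric] mk_dcoef_diag mk_dcoef_12 mk_dcoef_21[OF U0])
    also have "\<dots> = gdif (homP (cm n Q :: 'k gcx) j s) m a"
      by (simp add: homP_def Let_def gactpow_cm[OF cv])
    finally show "gdif (homP (cm n Q :: 'k gcx) j s) m a = gdif (cm (Suc n) (homPP j s Q) :: 'k gcx) m a" by simp
  qed
  show "gx (homP (cm n Q :: 'k gcx) j s) = gx (cm (Suc n) (homPP j s Q) :: 'k gcx)"
  proof (rule ext, rule ext)
    fix m a
    have e: "mv j (mv (Suc 0) a 1) (int s) = mv (Suc 0) (mv j a (int s)) 1" by (simp add: mv_comm)
    show "gx (homP (cm n Q :: 'k gcx) j s) m a = gx (cm (Suc n) (homPP j s Q) :: 'k gcx) m a"
      by (simp add: homP_def Let_def LL_homPP gact_cm mk_append[symmetric] mk_pid_diag mk_pid_off e)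
  qed
  show "gy (homP (cm n Q :: 'k gcx) j s) = gy (cm (Suc n) (homPP j s Q) :: 'k gcx)"
  proof (rule ext, rule ext)
    fix m a
    have e: "mv j (mv 2 a 1) (int s) = mv 2 (mv j a (int s)) 1" by (simp add: mv_comm)
    show "gy (homP (cm n Q :: 'k gcx) j s) m a = gy (cm (Suc n) (homPP j s Q) :: 'k gcx) m a"
      by (simp add: homP_def Let_def LL_homPP gact_cm mk_append[symmetric] mk_pid_diag mk_pid_off e)
  qed
qed simp


lemma ptrunc_mv_ge: "acomp a i \<ge> int (tcomp t i) \<Longrightarrow> ptrunc t (mv i a 1) = ptrunc t a"
  by (auto simp: ptrunc_def mv_def acomp_def tcomp_def split: if_splits)
lemma ptrunc_mv_lt: "acomp a i < int (tcomp t i) \<Longrightarrow> ptrunc t (mv i a 1) = mv i (ptrunc t a) 1"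
  by (auto simp: ptrunc_def mv_def acomp_def tcomp_def split: if_splits)
lemma nonneg_mv: "nonneg a \<Longrightarrow> nonneg (mv i a 1)"
  by (auto simp: nonneg_def mv_def)

lemma LL_pull: "LL n (\<lambda>a w. nonneg a \<and> R (ptrunc t a) w) m a = (if nonneg a then LL n R m (ptrunc t a) else [])"
  by (simp add: LL_def)

lemma mk_nil: "mk g R [] = 0\<^sub>m (length R) 0" "mk g [] [] = 0\<^sub>m 0 0"
  by (auto intro!: eq_matI)

lemma pull_cm: "pull t (cm n R :: 'k::comm_ring_1 gcx) = cm n (\<lambda>a w. nonneg a \<and> R (ptrunc t a) w)"
proof (rule gcx.equality)
  show "gdim (pull t (cm n R :: 'k gcx)) = gdim (cm n (\<lambda>a w. nonneg a \<and> R (ptrunc t a) w) :: 'k gcx)"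
    by (rule ext, rule ext) (simp add: pull_def Let_def LL_pull)
  show "gdif (pull t (cm n R :: 'k gcx)) = gdif (cm n (\<lambda>a w. nonneg a \<and> R (ptrunc t a) w) :: 'k gcx)"
    by (rule ext, rule ext) (simp add: pull_def Let_def LL_pull mk_nil)
  show "gx (pull t (cm n R :: 'k gcx)) = gx (cm n (\<lambda>a w. nonneg a \<and> R (ptrunc t a) w) :: 'k gcx)"
  proof (rule ext, rule ext)
    fix m a
    show "gx (pull t (cm n R :: 'k gcx)) m a = gx (cm n (\<lambda>a w. nonneg a \<and> R (ptrunc t a) w) :: 'k gcx) m a"
    proof (cases "nonneg a")
      case True
      then show ?thesis
      proof (cases "acomp a 1 \<ge> int (tcomp t 1)")
        case True
        then show ?thesis using \<open>nonneg a\<close> nonneg_mv[OF \<open>nonneg a\<close>, of 1]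
          by (simp add: pull_def Let_def LL_pull ptrunc_mv_ge mk_pid_id)
      next
        case False
        then show ?thesis using \<open>nonneg a\<close> nonneg_mv[OF \<open>nonneg a\<close>, of 1]
          by (simp add: pull_def Let_def LL_pull ptrunc_mv_lt gact_cm)
      qed
    next
      case False
      then show ?thesis by (simp add: pull_def Let_def LL_pull mk_nil)
    qed
  qed
  show "gy (pull t (cm n R :: 'k gcx)) = gy (cm n (\<lambda>a w. nonneg a \<and> R (ptrunc t a) w) :: 'k gcx)"
  proof (rule ext, rule ext)
    fix m a
    show "gy (pull t (cm n R :: 'k gcx)) m a = gy (cm n (\<lambda>a w. nonneg a \<and> R (ptrunc t a) w) :: 'k gcx) m a"
    proof (cases "nonneg a")
      case True
      then show ?thesis
      proof (cases "acomp a 2 \<ge> int (tcomp t 2)")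
        case True
        then show ?thesis using \<open>nonneg a\<close> nonneg_mv[OF \<open>nonneg a\<close>, of 2]
          by (simp add: pull_def Let_def LL_pull ptrunc_mv_ge mk_pid_id)
      next
        case False
        then show ?thesis using \<open>nonneg a\<close> nonneg_mv[OF \<open>nonneg a\<close>, of 2]
          by (simp add: pull_def Let_def LL_pull ptrunc_mv_lt gact_cm)
      qed
    next
      case False
      then show ?thesis by (simp add: pull_def Let_def LL_pull mk_nil)
    qed
  qed
qed simp

lemma nak1_cm: "convex_dir j P \<Longrightarrow> nak1 t j (cm n P :: 'k::comm_ring_1 gcx) =
  cm (Suc n) (\<lambda>a w. nonneg a \<and> homPP j (tcomp t j + 1) (\<lambda>b. P (mv j b (-1))) (ptrunc t a) w)"
  unfolding nak1_def twist_cm by (simp add: homP_cm convex_shift pull_cm)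


definition valid :: "int \<Rightarrow> bool list \<Rightarrow> bool" where
  "valid c w = (if tp w = {} then int (length w) \<le> c else int (Min (tp w)) \<le> c)"
definition FF :: "nat \<Rightarrow> int \<Rightarrow> bool list \<Rightarrow> int" where
  "FF tt c w = (if tp w = {} then c - int (length w) else int tt - int (length w) + 1 + int (Max (tp w)))"
definition PR :: "nat \<times> nat \<Rightarrow> (nat \<times> nat) set \<Rightarrow> nat \<Rightarrow> mdeg \<Rightarrow> bool list \<Rightarrow> bool" where
  "PR t E i a w = (nonneg a \<and> valid (fst (ptrunc t a)) (take i w) \<and> valid (snd (ptrunc t a)) (drop i w) \<and>
      in_quot E (FF (fst t) (fst (ptrunc t a)) (take i w), FF (snd t) (snd (ptrunc t a)) (drop i w)))"

lemma tp_True: "tp (True # x) = insert 0 (Suc ` tp x)" by (simp add: tp_Cons)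
lemma tp_False: "tp (False # x) = Suc ` tp x" by (simp add: tp_Cons)
lemma tp_nil[simp]: "tp [] = {}" by (simp add: tp_def)

lemma Min_Suc: "finite S \<Longrightarrow> S \<noteq> {} \<Longrightarrow> Min (Suc ` S) = Suc (Min S)"
  by (simp add: mono_Min_commute[symmetric] mono_Suc)
lemma Max_Suc: "finite S \<Longrightarrow> S \<noteq> {} \<Longrightarrow> Max (Suc ` S) = Suc (Max S)"
  by (simp add: mono_Max_commute[symmetric] mono_Suc)

lemma valid_True[simp]: "valid c (True # x) \<longleftrightarrow> 0 \<le> c"
proof -
  have "Min (insert 0 (Suc ` tp x)) = 0" by (rule Min_eqI) auto
  then show ?thesis by (simp add: valid_def tp_True)
qed
lemma valid_False[simp]: "valid c (False # x) \<longleftrightarrow> valid (c - 1) x"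
  by (auto simp: valid_def tp_False Min_Suc)
lemma valid_nil[simp]: "valid c [] \<longleftrightarrow> 0 \<le> c" by (simp add: valid_def)
lemma valid_nonneg: "valid c x \<Longrightarrow> 0 \<le> c"
  by (auto simp: valid_def split: if_splits)
lemma valid_mono: "valid c x \<Longrightarrow> c \<le> c' \<Longrightarrow> valid c' x"
  by (auto simp: valid_def split: if_splits)
lemma valid_long: "length x \<le> tt \<Longrightarrow> valid (int tt) x"
proof (cases "tp x = {}")
  case True then show "length x \<le> tt \<Longrightarrow> valid (int tt) x" by (simp add: valid_def)
next
  case False
  then have "Min (tp x) \<in> tp x" by simp
  then have "Min (tp x) < length x" by (simp add: tp_def)
  then show "length x \<le> tt \<Longrightarrow> valid (int tt) x" using False by (simp add: valid_def)
qed

lemma FF_False[simp]: "FF tt c (False # x) = FF tt (c - 1) x"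
  by (auto simp: FF_def tp_False Max_Suc)
lemma FF_True[simp]: "FF tt c (True # x) = FF tt (int tt) x"
proof (cases "tp x = {}")
  case True
  have "Max (insert 0 (Suc ` tp x)) = 0" using True by simp
  then show ?thesis using True by (simp add: FF_def tp_True)
next
  case False
  have "Max (insert 0 (Suc ` tp x)) = Suc (Max (tp x))" using False
    by (simp add: Max_Suc Max_insert)
  then show ?thesis using False by (simp add: FF_def tp_True)
qed
lemma FF_nil[simp]: "FF tt c [] = c" by (simp add: FF_def)
lemma FF_mono: "c \<le> c' \<Longrightarrow> FF tt c x \<le> FF tt c' x"
  by (simp add: FF_def)

lemma step1:
  assumes "i \<le> fst t" "length w = Suc n" "i \<le> n"
  shows "(nonneg a \<and> homPP 1 (tcomp t 1 + 1) (\<lambda>b. PR t E i (mv 1 b (-1))) (ptrunc t a) w) = PR t E (Suc i) a w"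
proof -
  obtain b x where w: "w = b # x" using assms by (cases w) auto
  obtain a1 a2 where a: "a = (a1, a2)" by (cases a)
  have lt: "length (take i x) \<le> fst t" using assms by simp
  show ?thesis
  proof (cases b)
    case True
    then show ?thesis using valid_long[OF lt]
      by (auto simp: w a homPP_def PR_def ptrunc_def mv_def tcomp_def nonneg_def)
  next
    case False
    then show ?thesis
      by (auto simp: w a homPP_def PR_def ptrunc_def mv_def tcomp_def nonneg_def dest: valid_nonneg)
  qed
qed

lemma step2:
  assumes "length w = Suc n" "n \<le> snd t"
  shows "(nonneg a \<and> homPP 2 (tcomp t 2 + 1) (\<lambda>b. PR t E 0 (mv 2 b (-1))) (ptrunc t a) w) = PR t E 0 a w"
proof -
  obtain b x where w: "w = b # x" "length x \<le> snd t" using assms by (cases w) auto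
  obtain a1 a2 where a: "a = (a1, a2)" by (cases a)
  show ?thesis
  proof (cases b)
    case True
    then show ?thesis using valid_long[OF w(2)]
      by (auto simp: w a homPP_def PR_def ptrunc_def mv_def tcomp_def nonneg_def)
  next
    case False
    then show ?thesis
      by (auto simp: w a homPP_def PR_def ptrunc_def mv_def tcomp_def nonneg_def dest: valid_nonneg)
  qed
qed

lemma in_quot_between:
  assumes E: "monomial_ideal_exps E" and p: "in_quot E p" and q: "in_quot E q"
    and "fst p \<le> fst r" "snd p \<le> snd r" "fst r \<le> fst q" "snd r \<le> snd q"
  shows "in_quot E r"
proof -
  have r0: "0 \<le> fst r" "0 \<le> snd r" using p assms(4,5) by (auto simp: in_quot_def)
  have "(nat (fst r), nat (snd r)) \<notin> E"
  proof
    assume "(nat (fst r), nat (snd r)) \<in> E"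
    moreover have "le2 (nat (fst r), nat (snd r)) (nat (fst q), nat (snd q))"
      using assms(6,7) by (auto simp: le2_def)
    ultimately have "(nat (fst q), nat (snd q)) \<in> E" using E by (auto simp: monomial_ideal_exps_def)
    then show False using q by (simp add: in_quot_def)
  qed
  then show ?thesis using r0 by (simp add: in_quot_def)
qed

lemma convex_PR: assumes E: "monomial_ideal_exps E" shows "convex_dir j (PR t E i)"
  unfolding convex_dir_def
proof (intro allI impI)
  fix a w s k
  assume h1: "PR t E i a w" and h2: "PR t E i (mv j a (int s)) w" and k: "k \<le> s"
  obtain a1 a2 where a: "a = (a1, a2)" by (cases a)
  let ?b = "mv j a (int k)"
  let ?c = "mv j a (int s)"
  have le1: "fst (ptrunc t a) \<le> fst (ptrunc t ?b)" "snd (ptrunc t a) \<le> snd (ptrunc t ?b)"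
    "fst (ptrunc t ?b) \<le> fst (ptrunc t ?c)" "snd (ptrunc t ?b) \<le> snd (ptrunc t ?c)"
    using k by (auto simp: a mv_def ptrunc_def)
  have nb: "nonneg ?b" using h1 by (auto simp: a mv_def nonneg_def PR_def)
  show "PR t E i ?b w"
    unfolding PR_def
  proof (intro conjI nb)
    show "valid (fst (ptrunc t ?b)) (take i w)" using h1 le1 valid_mono unfolding PR_def by blast
    show "valid (snd (ptrunc t ?b)) (drop i w)" using h1 le1 valid_mono unfolding PR_def by blast
    show "in_quot E (FF (fst t) (fst (ptrunc t ?b)) (take i w), FF (snd t) (snd (ptrunc t ?b)) (drop i w))"
      by (rule in_quot_between[OF E conjunct2[OF conjunct2[OF conjunct2[OF h1[unfolded PR_def]]]]
            conjunct2[OF conjunct2[OF conjunct2[OF h2[unfolded PR_def]]]]])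
         (simp_all add: FF_mono le1)
  qed
qed

lemma cm_cong: "(\<And>a w. length w = n \<Longrightarrow> P a w = Q a w) \<Longrightarrow> cm n P = cm n Q"
proof -
  assume h: "\<And>a w. length w = n \<Longrightarrow> P a w = Q a w"
  have "\<And>m a. LL n P m a = LL n Q m a" by (rule LL_cong) (simp add: h)
  then show ?thesis by (simp add: cm_def)
qed

lemma min_gen_below:
  assumes "b \<in> E" shows "\<exists>g\<in>min_gens E. le2 g b"
proof -
  let ?P = "\<lambda>g. g \<in> E \<and> le2 g b"
  obtain g where g: "?P g" and gm: "\<forall>y. ?P y \<longrightarrow> fst g + snd g \<le> fst y + snd y"
    using ex_has_least_nat[of ?P b "\<lambda>g. fst g + snd g"] assms by (auto simp: le2_def)
  have "g \<in> min_gens E"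
    unfolding min_gens_def
  proof (intro CollectI conjI ballI impI)
    show "g \<in> E" using g by simp
    fix y assume "y \<in> E" "le2 y g"
    then have "?P y" using g by (auto simp: le2_def)
    then have "fst g + snd g \<le> fst y + snd y" using gm by blast
    then show "y = g" using \<open>le2 y g\<close> by (auto simp: le2_def prod_eq_iff)
  qed
  then show ?thesis using g by blast
qed

lemma tdet: assumes "pos_t_determined_ideal t E"
  shows "in_quot E a \<longleftrightarrow> nonneg a \<and> in_quot E (ptrunc t a)"
proof -
  obtain a1 a2 where a: "a = (a1, a2)" by (cases a)
  have E: "monomial_ideal_exps E" and g: "\<forall>g\<in>min_gens E. le2 g t"
    using assms by (auto simp: pos_t_determined_ideal_def)
  show ?thesis
  proof (cases "0 \<le> a1 \<and> 0 \<le> a2")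
    case False then show ?thesis by (auto simp: a in_quot_def nonneg_def)
  next
    case True
    have "(nat a1, nat a2) \<in> E \<longleftrightarrow> (nat (min a1 (int (fst t))), nat (min a2 (int (snd t)))) \<in> E"
    proof
      assume "(nat a1, nat a2) \<in> E"
      then obtain g where "g \<in> min_gens E" "le2 g (nat a1, nat a2)" using min_gen_below by blast
      moreover then have "le2 g t" using g by blast
      ultimately have "le2 g (nat (min a1 (int (fst t))), nat (min a2 (int (snd t))))"
        by (auto simp: le2_def)
      moreover have "g \<in> E" using \<open>g \<in> min_gens E\<close> by (simp add: min_gens_def)
      ultimately show "(nat (min a1 (int (fst t))), nat (min a2 (int (snd t)))) \<in> E"
        using E by (auto simp: monomial_ideal_exps_def)
    next
      assume "(nat (min a1 (int (fst t))), nat (min a2 (int (snd t)))) \<in> E"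
      moreover have "le2 (nat (min a1 (int (fst t))), nat (min a2 (int (snd t)))) (nat a1, nat a2)"
        by (auto simp: le2_def)
      ultimately show "(nat a1, nat a2) \<in> E" using E by (auto simp: monomial_ideal_exps_def)
    qed
    then show ?thesis using True unfolding a in_quot_def nonneg_def ptrunc_def by simp
  qed
qed


lemma LL0: "LL 0 P m a = (if m = 0 \<and> P a [] then [[]] else [])"
  by (simp add: LL_def cnt_def)

lemma mk_dcoef_nil: "set R \<subseteq> {[]} \<Longrightarrow> mk dcoef R C = (0\<^sub>m (length R) (length C) :: 'k::comm_ring_1 mat)"
  by (rule eq_matI) (auto dest!: nth_mem)

lemma LL0_sub: "set (LL 0 P m a) \<subseteq> {[]}" by (auto simp: LL0)

lemma mk_pid_LL0: "mk pid (LL 0 P m b) (LL 0 P m a) = (if m = 0 \<and> P a [] \<and> P b [] then 1\<^sub>m 1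
   else (0\<^sub>m (length (LL 0 P m b)) (length (LL 0 P m a)) :: 'k::comm_ring_1 mat))"
proof (cases "m = 0 \<and> P a [] \<and> P b []")
  case True then show ?thesis using mk_pid_id[of "[[]]"] by (simp add: LL0)
next
  case False
  then have "LL 0 P m b = [] \<or> LL 0 P m a = []" by (auto simp: LL0)
  then show ?thesis using False by (auto intro!: eq_matI)
qed

lemma quot_cm: assumes "pos_t_determined_ideal t E"
  shows "quot_cx E = (cm 0 (PR t E 0) :: 'k::comm_ring_1 gcx)"
proof -
  have P: "\<And>a. PR t E 0 a [] = in_quot E a"
  proof -
    fix a
    show "PR t E 0 a [] = in_quot E a" unfolding tdet[OF assms, of a] PR_def
      by (auto simp: in_quot_def)
  qed
  have len: "\<And>m a. length (LL 0 (PR t E 0) m a) = qdim E m a" by (simp add: LL0 P qdim_def)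
  show ?thesis
  proof (rule gcx.equality)
    show "gdim (quot_cx E :: 'k gcx) = gdim (cm 0 (PR t E 0) :: 'k gcx)"
      by (rule ext, rule ext) (simp add: quot_cx_def len)
    show "gdif (quot_cx E :: 'k gcx) = gdif (cm 0 (PR t E 0) :: 'k gcx)"
      by (rule ext, rule ext) (simp only: quot_cx_def gcx.simps cm_simps mk_dcoef_nil[OF LL0_sub] len)
    show "gx (quot_cx E :: 'k gcx) = gx (cm 0 (PR t E 0) :: 'k gcx)"
      by (rule ext, rule ext) (simp only: quot_cx_def gcx.simps cm_simps mk_pid_LL0 len P qact_def)
    show "gy (quot_cx E :: 'k gcx) = gy (cm 0 (PR t E 0) :: 'k gcx)"
      by (rule ext, rule ext) (simp only: quot_cx_def gcx.simps cm_simps mk_pid_LL0 len P qact_def)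
  qed (simp add: quot_cx_def cm_def)
qed

lemma iter2: assumes "pos_t_determined_ideal t E" "j \<le> Suc (snd t)"
  shows "((nak1 t 2)^^j) (quot_cx E) = (cm j (PR t E 0) :: 'k::comm_ring_1 gcx)"
  using assms(2)
proof (induction j)
  case 0 then show ?case using quot_cm[OF assms(1)] by simp
next
  case (Suc j)
  have E: "monomial_ideal_exps E" using assms(1) by (simp add: pos_t_determined_ideal_def)
  have "((nak1 t 2)^^Suc j) (quot_cx E) = nak1 t 2 (cm j (PR t E 0) :: 'k gcx)" using Suc by simp
  also have "\<dots> = cm (Suc j) (PR t E 0)"
    unfolding nak1_cm[OF convex_PR[OF E]]
    by (rule cm_cong) (rule step2, use Suc in auto)
  finally show ?case .
qed

lemma iter1: assumes "monomial_ideal_exps E" "i \<le> Suc (fst t)"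
  shows "((nak1 t 1)^^i) (cm j (PR t E 0)) = (cm (i + j) (PR t E i) :: 'k::comm_ring_1 gcx)"
  using assms(2)
proof (induction i)
  case 0 then show ?case by simp
next
  case (Suc i)
  have "((nak1 t 1)^^Suc i) (cm j (PR t E 0)) = nak1 t 1 (cm (i + j) (PR t E i) :: 'k gcx)" using Suc by simp
  also have "\<dots> = cm (Suc i + j) (PR t E (Suc i))"
    unfolding nak1_cm[OF convex_PR[OF assms(1)]] add_Suc
    by (rule cm_cong) (rule step1[where n="i+j"], use Suc in auto)
  finally show ?case .
qed

lemma nak_cm: assumes "pos_t_determined_ideal t E" "fst k \<le> Suc (fst t)" "snd k \<le> Suc (snd t)"
  shows "nak t k (quot_cx E) = (cm (fst k + snd k) (PR t E (fst k)) :: 'k::comm_ring_1 gcx)"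
proof -
  have E: "monomial_ideal_exps E" using assms(1) by (simp add: pos_t_determined_ideal_def)
  have "nak t k (quot_cx E) = ((nak1 t 1)^^(fst k)) (cm (snd k) (PR t E 0) :: 'k gcx)"
    unfolding nak_def iter2[OF assms(1,3)] ..
  also have "\<dots> = cm (fst k + snd k) (PR t E (fst k))" by (rule iter1[OF E assms(2)])
  finally show ?thesis .
qed


lemma sum_nth_distinct: "distinct L \<Longrightarrow> (\<Sum>i = 0..<length L. f (L!i)) = (\<Sum>x\<in>set L. f x)"
proof -
  assume d: "distinct L"
  have "(\<Sum>i = 0..<length L. f (L!i)) = sum_list (map f L)"
    by (simp add: sum_list_sum_nth)
  also have "\<dots> = (\<Sum>x\<in>set L. f x)" using d by (simp add: sum_list_distinct_conv_sum_set)
  finally show ?thesis .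
qed

lemma sum_pick: "distinct L \<Longrightarrow> r < length L \<Longrightarrow>
   (\<Sum>s = 0..<length L. (v $ s) * (if L!r = L!s then 1 else 0)) = (v $ r :: 'k::comm_ring_1)"
proof -
  assume d: "distinct L" and r: "r < length L"
  have "(\<Sum>s = 0..<length L. (v $ s) * (if L!r = L!s then 1 else 0)) = (\<Sum>s = 0..<length L. if s = r then v $ s else 0)"
    by (rule sum.cong) (use d r in \<open>auto simp: nth_eq_iff_index_eq\<close>)
  also have "\<dots> = v $ r" using r by simp
  finally show ?thesis .
qed

lemma homotopy_exact:
  fixes d h :: "'a \<Rightarrow> 'a \<Rightarrow> 'k::comm_ring_1"
  assumes d1: "distinct L1" and d2: "distinct L2" and d3: "distinct L3"
    and hid: "\<And>x'' x. x'' \<in> set L2 \<Longrightarrow> x \<in> set L2 \<Longrightarrow>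
       (\<Sum>y\<in>set L1. d x'' y * h y x) + (\<Sum>z\<in>set L3. h x'' z * d z x) = (if x'' = x then 1 else 0)"
    and v: "v \<in> carrier_vec (length L2)" and ker: "mk d L3 L2 *\<^sub>v v = 0\<^sub>v (length L3)"
  shows "\<exists>w \<in> carrier_vec (length L1). v = mk d L2 L1 *\<^sub>v w"
proof -
  define w where "w = vec (length L1) (\<lambda>r. \<Sum>s = 0..<length L2. h (L1!r) (L2!s) * v $ s)"
  have kq: "\<And>q. q < length L3 \<Longrightarrow> (\<Sum>s = 0..<length L2. d (L3!q) (L2!s) * v $ s) = 0"
  proof -
    fix q assume q: "q < length L3"
    have "(mk d L3 L2 *\<^sub>v v) $ q = 0" using ker q by simp
    then show "(\<Sum>s = 0..<length L2. d (L3!q) (L2!s) * v $ s) = 0"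
      using q v by (simp add: scalar_prod_def row_def)
  qed
  have "v = mk d L2 L1 *\<^sub>v w"
  proof (rule eq_vecI)
    show "dim_vec v = dim_vec (mk d L2 L1 *\<^sub>v w)" using v by simp
    fix r assume "r < dim_vec (mk d L2 L1 *\<^sub>v w)"
    then have r: "r < length L2" by simp
    let ?x = "L2!r"
    have "(mk d L2 L1 *\<^sub>v w) $ r = (\<Sum>i = 0..<length L1. d ?x (L1!i) * (\<Sum>s = 0..<length L2. h (L1!i) (L2!s) * v $ s))"
      using r by (simp add: scalar_prod_def row_def w_def)
    also have "\<dots> = (\<Sum>i = 0..<length L1. \<Sum>s = 0..<length L2. v $ s * (d ?x (L1!i) * h (L1!i) (L2!s)))"
      by (simp add: sum_distrib_left mult_ac)
    also have "\<dots> = (\<Sum>s = 0..<length L2. v $ s * (\<Sum>i = 0..<length L1. d ?x (L1!i) * h (L1!i) (L2!s)))"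
      by (subst sum.swap) (simp add: sum_distrib_left)
    also have "\<dots> = (\<Sum>s = 0..<length L2. v $ s * ((if ?x = L2!s then 1 else 0) - (\<Sum>z\<in>set L3. h ?x z * d z (L2!s))))"
    proof (rule sum.cong[OF refl])
      fix s assume s: "s \<in> {0..<length L2}"
      have "(\<Sum>i = 0..<length L1. d ?x (L1!i) * h (L1!i) (L2!s)) = (\<Sum>y\<in>set L1. d ?x y * h y (L2!s))"
        using sum_nth_distinct[OF d1] .
      also have "\<dots> = (if ?x = L2!s then 1 else 0) - (\<Sum>z\<in>set L3. h ?x z * d z (L2!s))"
        using hid[of ?x "L2!s"] r s by (simp add: eq_diff_eq)
      finally show "v $ s * (\<Sum>i = 0..<length L1. d ?x (L1!i) * h (L1!i) (L2!s)) =
         v $ s * ((if ?x = L2!s then 1 else 0) - (\<Sum>z\<in>set L3. h ?x z * d z (L2!s)))" by simp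
    qed
    also have "\<dots> = (\<Sum>s = 0..<length L2. v $ s * (if ?x = L2!s then 1 else 0))
        - (\<Sum>s = 0..<length L2. \<Sum>q = 0..<length L3. h ?x (L3!q) * (d (L3!q) (L2!s) * v $ s))"
      by (simp add: right_diff_distrib sum_subtractf sum_nth_distinct[OF d3, symmetric] sum_distrib_left mult_ac)
    also have "\<dots> = v $ r - (\<Sum>q = 0..<length L3. h ?x (L3!q) * (\<Sum>s = 0..<length L2. d (L3!q) (L2!s) * v $ s))"
      by (subst sum.swap) (simp add: sum_pick[OF d2 r] sum_distrib_left)
    also have "\<dots> = v $ r" using kq by simp
    finally show "v $ r = (mk d L2 L1 *\<^sub>v w) $ r" by simp
  qed
  moreover have "w \<in> carrier_vec (length L1)" by (simp add: w_def)
  ultimately show ?thesis by blast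
qed

lemma not_exact:
  fixes d :: "'a \<Rightarrow> 'a \<Rightarrow> 'k::comm_ring_1"
  assumes d2: "distinct L2" and e1: "L1 = []" and ne: "L2 \<noteq> []"
    and cyc: "\<And>z. z \<in> set L3 \<Longrightarrow> (\<Sum>x\<in>set L2. d z x) = 0"
  shows "\<not> (\<forall>v \<in> carrier_vec (length L2). mk d L3 L2 *\<^sub>v v = 0\<^sub>v (length L3) \<longrightarrow>
            (\<exists>w\<in>carrier_vec (length L1). v = mk d L2 L1 *\<^sub>v w))"
proof
  assume all: "\<forall>v \<in> carrier_vec (length L2). mk d L3 L2 *\<^sub>v v = 0\<^sub>v (length L3) \<longrightarrow>
            (\<exists>w\<in>carrier_vec (length L1). v = mk d L2 L1 *\<^sub>v w)"
  define v :: "'k vec" where "v = vec (length L2) (\<lambda>_. 1)"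
  have "mk d L3 L2 *\<^sub>v v = 0\<^sub>v (length L3)"
  proof (rule eq_vecI)
    fix q assume "q < dim_vec (0\<^sub>v (length L3) :: 'k vec)"
    then have q: "q < length L3" by simp
    have "(mk d L3 L2 *\<^sub>v v) $ q = (\<Sum>s = 0..<length L2. d (L3!q) (L2!s))"
      using q by (simp add: scalar_prod_def row_def v_def)
    also have "\<dots> = 0" using sum_nth_distinct[OF d2, of "d (L3!q)"] cyc[of "L3!q"] q by simp
    finally show "(mk d L3 L2 *\<^sub>v v) $ q = (0\<^sub>v (length L3) :: 'k vec) $ q" using q by simp
  qed simp
  then obtain w where "v = mk d L2 L1 *\<^sub>v w" "w \<in> carrier_vec (length L1)" using all v_def by auto
  then have "v $ 0 = 0" using ne e1 by (simp add: scalar_prod_def row_def)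
  moreover have "v $ 0 = 1" using ne by (simp add: v_def)
  ultimately show False by simp
qed


lemma hz_cm_D:
  fixes v :: "'k::field vec"
  assumes "homology_zero (cm n P :: 'k gcx) m" "v \<in> carrier_vec (length (LL n P m a))"
    "mk dcoef (LL n P (m - 1) a) (LL n P m a) *\<^sub>v v = 0\<^sub>v (length (LL n P (m - 1) a))"
  shows "\<exists>w \<in> carrier_vec (length (LL n P (m + 1) a)). v = mk dcoef (LL n P m a) (LL n P (m + 1) a) *\<^sub>v w"
proof -
  have e: "m + 1 - 1 = m" by simp
  have "v \<in> {v \<in> carrier_vec (gdim (cm n P :: 'k gcx) m a). gdif (cm n P :: 'k gcx) m a *\<^sub>v v = 0\<^sub>v (gdim (cm n P :: 'k gcx) (m - 1) a)}"
    using assms(2,3) by simp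
  then have "v \<in> {gdif (cm n P :: 'k gcx) (m + 1) a *\<^sub>v w |w. w \<in> carrier_vec (gdim (cm n P :: 'k gcx) (m + 1) a)}"
    using assms(1) unfolding homology_zero_def by blast
  then obtain w where "v = gdif (cm n P :: 'k gcx) (m + 1) a *\<^sub>v w" "w \<in> carrier_vec (gdim (cm n P :: 'k gcx) (m + 1) a)"
    by blast
  then show ?thesis unfolding cm_simps e by blast
qed

lemma hz_cm_I:
  assumes "\<And>a (v::'k::field vec). v \<in> carrier_vec (length (LL n P m a)) \<Longrightarrow>
    mk dcoef (LL n P (m - 1) a) (LL n P m a) *\<^sub>v v = 0\<^sub>v (length (LL n P (m - 1) a)) \<Longrightarrow>
    \<exists>w \<in> carrier_vec (length (LL n P (m + 1) a)). v = mk dcoef (LL n P m a) (LL n P (m + 1) a) *\<^sub>v w"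
  shows "homology_zero (cm n P :: 'k gcx) m"
  unfolding homology_zero_def
proof (intro allI subsetI)
  fix a v assume "v \<in> {v \<in> carrier_vec (gdim (cm n P :: 'k gcx) m a). gdif (cm n P :: 'k gcx) m a *\<^sub>v v = 0\<^sub>v (gdim (cm n P :: 'k gcx) (m - 1) a)}"
  then have "v \<in> carrier_vec (length (LL n P m a))"
    "mk dcoef (LL n P (m - 1) a) (LL n P m a) *\<^sub>v v = 0\<^sub>v (length (LL n P (m - 1) a))" by auto
  from assms[OF this] obtain w where "w \<in> carrier_vec (length (LL n P (m + 1) a))"
    "v = mk dcoef (LL n P m a) (LL n P (m + 1) a) *\<^sub>v w" by blast
  moreover have e: "m + 1 - 1 = m" by simp
  ultimately show "v \<in> {gdif (cm n P :: 'k gcx) (m + 1) a *\<^sub>v w |w. w \<in> carrier_vec (gdim (cm n P :: 'k gcx) (m + 1) a)}"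
    unfolding cm_simps e by blast
qed


lemma in_tp: "p \<in> tp w \<longleftrightarrow> p < length w \<and> w ! p" by (simp add: tp_def)

lemma tp_upd: "p < length w \<Longrightarrow> tp (w[p:=b]) = (if b then insert p (tp w) else tp w - {p})"
  by (auto simp: tp_def nth_list_update)

lemma dcoef_nz: "dcoef w' w \<noteq> (0::'k::comm_ring_1) \<Longrightarrow> \<exists>p<length w. \<not> w ! p \<and> w' = w[p:=True]"
proof (induction w arbitrary: w')
  case Nil then show ?case by (cases w') auto
next
  case (Cons b x)
  then obtain b' x' where w': "w' = b' # x'" by (cases w') auto
  show ?case
  proof (cases "b = b'")
    case True
    then have "dcoef x' x \<noteq> (0::'k)" using Cons.prems w' by simp
    then obtain p where "p < length x" "\<not> x ! p" "x' = x[p:=True]" using Cons.IH by blast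
    then show ?thesis using True w' by (intro exI[of _ "Suc p"]) auto
  next
    case False
    then have "\<not> b \<and> b' \<and> x' = x" using Cons.prems w' by (auto split: if_splits)
    then show ?thesis using w' by (intro exI[of _ 0]) auto
  qed
qed

definition sg :: "bool list \<Rightarrow> nat \<Rightarrow> 'k::comm_ring_1" where
  "sg w p = - ((-1) ^ card {q \<in> tp w. p < q})"

lemma card_Suc_gt: "card {q \<in> Suc ` S. Suc p < q} = card {q \<in> S. p < q}"
proof -
  have "{q \<in> Suc ` S. Suc p < q} = Suc ` {q \<in> S. p < q}" by auto
  then show ?thesis by (simp add: card_image)
qed

lemma card_Suc_gt0: "{q \<in> Suc ` S. 0 < q} = Suc ` S" by auto

lemma dcoef_flip: "p < length w \<Longrightarrow> \<not> w ! p \<Longrightarrow> dcoef (w[p:=True]) w = (sg w p :: 'k::comm_ring_1)"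
proof (induction w arbitrary: p)
  case Nil then show ?case by simp
next
  case (Cons b x)
  show ?case
  proof (cases p)
    case 0
    then have "\<not> b" using Cons.prems by simp
    then show ?thesis using 0 by (simp add: sg_def tp_Cons card_Suc_gt0 card_image cnt_def)
  next
    case (Suc p')
    then have "dcoef (x[p':=True]) x = (sg x p' :: 'k)" using Cons by simp
    moreover have "card {q \<in> tp (b # x). Suc p' < q} = card {q \<in> tp x. p' < q}"
    proof -
      have "{q \<in> tp (b # x). Suc p' < q} = {q \<in> Suc ` tp x. Suc p' < q}" by (auto simp: tp_Cons)
      then show ?thesis by (simp add: card_Suc_gt)
    qed
    ultimately show ?thesis using Suc by (simp add: sg_def)
  qed
qed

lemma sg_sq: "sg w p * sg w p = (1::'k::comm_ring_1)"
proof -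
  have "\<And>c. ((-1::'k)^c) * (-1)^c = 1" by (induct_tac c) auto
  then show ?thesis by (simp add: sg_def)
qed

lemma sg_nz: "sg w p \<noteq> (0::'k::comm_ring_1)"
  using sg_sq[of w p] by (metis mult_zero_left zero_neq_one)

lemma anticomm:
  assumes "p < l" "l < length w" "\<not> w ! p" "\<not> w ! l"
  shows "dcoef (w[p:=True]) w * dcoef (w[l:=True]) w +
     dcoef (w[p:=True, l:=True]) (w[p:=True]) * dcoef (w[l:=True, p:=True]) (w[l:=True]) = (0::'k::comm_ring_1)"
proof -
  have pl: "p < length w" using assms by simp
  have e1: "dcoef (w[p:=True, l:=True]) (w[p:=True]) = (sg (w[p:=True]) l :: 'k)"
    by (rule dcoef_flip) (use assms in auto)
  have e2: "dcoef (w[l:=True, p:=True]) (w[l:=True]) = (sg (w[l:=True]) p :: 'k)"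
    by (rule dcoef_flip) (use assms in auto)
  have s1: "{q \<in> tp (w[p:=True]). l < q} = {q \<in> tp w. l < q}" using assms pl by (auto simp: tp_upd)
  have s2: "{q \<in> tp (w[l:=True]). p < q} = insert l {q \<in> tp w. p < q}" using assms by (auto simp: tp_upd)
  have nl: "l \<notin> {q \<in> tp w. p < q}" using assms by (simp add: tp_def)
  have c2: "card {q \<in> tp (w[l:=True]). p < q} = Suc (card {q \<in> tp w. p < q})"
    unfolding s2 using nl by (simp add: card_insert_if)
  show ?thesis unfolding e1 e2 dcoef_flip[OF pl assms(3)] dcoef_flip[OF assms(2,4)]
    by (simp add: sg_def s1 c2 algebra_simps)
qed

lemma sum_single: "finite S \<Longrightarrow> (\<And>y. y \<in> S \<Longrightarrow> f y = (if y = y0 then c else 0)) \<Longrightarrow>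
   sum f S = (if y0 \<in> S then c else (0::'k::comm_ring_1))"
proof -
  assume "finite S" "\<And>y. y \<in> S \<Longrightarrow> f y = (if y = y0 then c else 0)"
  then have "sum f S = sum (\<lambda>y. if y = y0 then c else 0) S" by (intro sum.cong) auto
  also have "\<dots> = (if y0 \<in> S then c else 0)" using \<open>finite S\<close> by simp
  finally show ?thesis .
qed


lemma upd_F_id: "\<not> xs ! i \<Longrightarrow> xs[i:=False] = xs" by (metis list_update_id)
lemma upd_T_id: "xs ! i \<Longrightarrow> xs[i:=True] = xs" by (metis list_update_id)

definition Hh :: "(bool list \<Rightarrow> nat) \<Rightarrow> bool list \<Rightarrow> bool list \<Rightarrow> 'k::comm_ring_1" where
  "Hh l y x = (if x ! l x \<and> y = x[l x := False] then dcoef x y else 0)"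

lemma homotopy_identity:
  fixes S1 S2 S3 :: "bool list set" and l :: "bool list \<Rightarrow> nat"
  assumes fin: "finite S1" "finite S3"
   and len: "\<forall>x\<in>S1\<union>S2\<union>S3. length x = n"
   and ne1: "\<forall>y\<in>S1. tp y \<noteq> {}"
   and ne2: "\<forall>x\<in>S2. tp x \<noteq> {}"
   and G0: "\<forall>x\<in>S2. l x < n"
   and G0': "\<forall>x\<in>S3. l x < n"
   and G1: "\<forall>x\<in>S2. x ! l x \<longrightarrow> x[l x := False] \<in> S1"
   and G2: "\<forall>x\<in>S2. \<not> x ! l x \<longrightarrow> x[l x := True] \<in> S3"
   and G3: "\<forall>x\<in>S2. \<forall>p. x ! l x \<longrightarrow> p < n \<longrightarrow> \<not> x ! p \<longrightarrow> p \<noteq> l x \<longrightarrow>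
              x[l x := False, p := True] \<in> S2 \<longrightarrow> p < l x \<and> x[p := True] \<in> S3"
   and G4: "\<forall>u\<in>S1\<union>S2\<union>S3. \<forall>v\<in>S1\<union>S2\<union>S3. tp u \<inter> tp v \<noteq> {} \<longrightarrow> l u = l v"
   and x2: "x'' \<in> S2" and x: "x \<in> S2"
  shows "(\<Sum>y\<in>S1. dcoef x'' y * Hh l y x) + (\<Sum>z\<in>S3. Hh l x'' z * dcoef z x) = (if x'' = x then 1 else (0::'k::comm_ring_1))"
proof -
  define y0 where "y0 = x[l x := False]"
  define z0 where "z0 = x''[l x'' := True]"
  have lx: "l x < length x" using G0 len x by auto
  have lx2: "l x'' < length x''" using G0 len x2 by auto
  have lenx: "length x = n" "length x'' = n" using len x x2 by auto
  have T1: "(\<Sum>y\<in>S1. dcoef x'' y * Hh l y x) = (if x ! l x \<and> y0 \<in> S1 then dcoef x'' y0 * dcoef x y0 else (0::'k))"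
  proof -
    have "(\<Sum>y\<in>S1. dcoef x'' y * Hh l y x) = (if y0 \<in> S1 then (if x ! l x then dcoef x'' y0 * dcoef x y0 else 0) else (0::'k))"
      by (rule sum_single[OF fin(1)]) (auto simp: Hh_def y0_def)
    then show ?thesis by auto
  qed
  have T2: "(\<Sum>z\<in>S3. Hh l x'' z * dcoef z x) = (if \<not> x'' ! l x'' \<and> z0 \<in> S3 then dcoef z0 x'' * dcoef z0 x else (0::'k))"
  proof -
    have "(\<Sum>z\<in>S3. Hh l x'' z * dcoef z x) = (if z0 \<in> S3 then (if \<not> x'' ! l x'' then dcoef z0 x'' * dcoef z0 x else 0) else (0::'k))"
    proof (rule sum_single[OF fin(2)])
      fix z assume z: "z \<in> S3"
      show "Hh l x'' z * dcoef z x = (if z = z0 then (if \<not> x'' ! l x'' then dcoef z0 x'' * dcoef z0 x else 0) else (0::'k))"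
      proof (cases "z ! l z \<and> x'' = z[l z := False]")
        case True
        have lzlen: "l z < length z" using G0' len z by auto
        have "tp x'' \<subseteq> tp z" using True lzlen by (auto simp: tp_upd)
        then have "tp x'' \<inter> tp z \<noteq> {}" using ne2 x2 by auto
        then have lz: "l z = l x''" using G4 z x2 by blast
        have e1: "x'' = z[l x'' := False]" and e2: "z ! l x''" using True lz by auto
        have "z0 = z[l x'' := False, l x'' := True]" unfolding z0_def using e1 by simp
        also have "\<dots> = z" using e2 by (simp add: upd_T_id)
        finally have zz: "z = z0" by simp
        have nx: "\<not> x'' ! l x''" using True lz lzlen by (metis nth_list_update_eq)
        show ?thesis using True zz nx by (simp add: Hh_def)
      next
        case False
        have "z \<noteq> z0 \<or> x'' ! l x''"
        proof (rule ccontr)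
          assume "\<not> (z \<noteq> z0 \<or> x'' ! l x'')"
          then have zz: "z = z0" and nx: "\<not> x'' ! l x''" by auto
          have "tp x'' \<subseteq> tp z" using zz lx2 by (auto simp: z0_def tp_upd)
          then have "tp x'' \<inter> tp z \<noteq> {}" using ne2 x2 by auto
          then have lz: "l z = l x''" using G4 z x2 by blast
          have "z ! l z" using zz lz lx2 by (simp add: z0_def)
          moreover have "x'' = z[l z := False]" using zz nx lz by (simp add: z0_def upd_F_id)
          ultimately have "z ! l z \<and> x'' = z[l z := False]" by blast
          then show False using False by blast
        qed
        moreover have "Hh l x'' z = (0::'k)" using False unfolding Hh_def by (simp only: if_False)
        ultimately show ?thesis by auto
      qed
    qed
    then show ?thesis by auto
  qed
  have sq: "\<And>w p. p < length w \<Longrightarrow> \<not> w ! p \<Longrightarrow> dcoef (w[p:=True]) w * dcoef (w[p:=True]) w = (1::'k)"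
    by (simp add: dcoef_flip sg_sq)
  show ?thesis
  proof (cases "x ! l x")
    case True
    have y0S: "y0 \<in> S1" using G1 x True by (simp add: y0_def)
    have xy0: "x = y0[l x := True]" using True by (simp add: y0_def upd_T_id)
    have ny0: "\<not> y0 ! l x" using lx by (simp add: y0_def)
    have ly0: "l x < length y0" using lx by (simp add: y0_def)
    show ?thesis
    proof (cases "x'' = x")
      case True
      have "dcoef x'' y0 * dcoef x y0 = (1::'k)" using sq[OF ly0 ny0] True xy0 by simp
      then show ?thesis unfolding T1 T2 using True \<open>x ! l x\<close> y0S by simp
    next
      case False
      show ?thesis
      proof (cases "dcoef x'' y0 = (0::'k)")
        case False
        then obtain p where p: "p < length y0" "\<not> y0 ! p" "x'' = y0[p:=True]" using dcoef_nz by blast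
        have pl: "p \<noteq> l x" using p \<open>x'' \<noteq> x\<close> xy0 by auto
        have nxp: "\<not> x ! p" using p pl by (simp add: y0_def)
        have pn: "p < n" using p lenx by (simp add: y0_def)
        have x2e: "x'' = x[l x := False, p := True]" using p by (simp add: y0_def)
        from G3 x True pn nxp pl x2 x2e have g3: "p < l x" "x[p := True] \<in> S3" by blast+
        have "tp y0 \<subseteq> tp x''" using p by (auto simp: tp_upd)
        moreover have "tp y0 \<noteq> {}" using ne1 y0S by blast
        moreover have "tp y0 \<subseteq> tp x" using lx by (auto simp: y0_def tp_upd)
        ultimately have "tp x'' \<inter> tp x \<noteq> {}" by blast
        then have l2: "l x'' = l x" using G4 x x2 by blast
        have nx2: "\<not> x'' ! l x''" using l2 p pl ny0 by simp
        have z0e: "z0 = y0[p:=True, l x := True]" using l2 p by (simp add: z0_def)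
        have "y0[p:=True, l x:=True] = x[l x:=False, p:=True, l x:=True]" by (simp add: y0_def)
        also have "\<dots> = x[p:=True, l x:=False, l x:=True]" using pl by (simp add: list_update_swap)
        also have "\<dots> = x[p:=True, l x := True]" by simp
        also have "\<dots> = x[p:=True]" using True pl by (simp add: upd_T_id nth_list_update)
        finally have xp: "y0[p:=True, l x:=True] = x[p:=True]" .
        have z0S: "z0 \<in> S3" using g3(2) z0e xp by simp
        have A: "dcoef (y0[p:=True]) y0 * dcoef (y0[l x:=True]) y0 +
           dcoef (y0[p:=True, l x:=True]) (y0[p:=True]) * dcoef (y0[l x:=True, p:=True]) (y0[l x:=True]) = (0::'k)"
          by (rule anticomm[OF g3(1) ly0 p(2) ny0])
        have sw: "y0[l x:=True, p:=True] = y0[p:=True, l x:=True]" using pl by (simp add: list_update_swap)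
        have "dcoef x'' y0 * dcoef x y0 + dcoef z0 x'' * dcoef z0 x = (0::'k)"
          using A unfolding sw unfolding z0e[symmetric] unfolding p(3)[symmetric] xy0[symmetric] .
        then show ?thesis unfolding T1 T2 using \<open>x ! l x\<close> y0S nx2 z0S \<open>x'' \<noteq> x\<close> by simp
      next
        case True
        have "\<not> (\<not> x'' ! l x'' \<and> z0 \<in> S3 \<and> dcoef z0 x \<noteq> (0::'k))"
        proof
          assume h: "\<not> x'' ! l x'' \<and> z0 \<in> S3 \<and> dcoef z0 x \<noteq> (0::'k)"
          then obtain q where q: "q < length x" "\<not> x ! q" "z0 = x[q:=True]" using dcoef_nz by blast
          have "tp x'' \<subseteq> tp z0" using lx2 by (auto simp: z0_def tp_upd)
          then have "tp x'' \<inter> tp z0 \<noteq> {}" using ne2 x2 by auto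
          then have a1: "l z0 = l x''" using G4 h x2 by blast
          have "tp x \<subseteq> tp z0" using q by (auto simp: tp_upd)
          then have "tp x \<inter> tp z0 \<noteq> {}" using ne2 x by auto
          then have a2: "l z0 = l x" using G4 h x by blast
          have ql: "q \<noteq> l x" using q \<open>x ! l x\<close> by auto
          have l2: "l x'' = l x" using a1 a2 by simp
          have "x'' = z0[l x := False]" using h l2 unfolding z0_def by (simp add: upd_F_id)
          also have "\<dots> = y0[q := True]" using q ql by (simp add: y0_def list_update_swap)
          finally have "x'' = y0[q:=True]" .
          moreover have "\<not> y0 ! q" using q ql by (simp add: y0_def)
          moreover have "q < length y0" using q by (simp add: y0_def)
          ultimately have "dcoef x'' y0 = (sg y0 q :: 'k)" by (simp add: dcoef_flip)
          then show False using True sg_nz by metis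
        qed
        then have "(if \<not> x'' ! l x'' \<and> z0 \<in> S3 then dcoef z0 x'' * dcoef z0 x else (0::'k)) = 0" by auto
        then show ?thesis unfolding T1 T2 using True \<open>x'' \<noteq> x\<close> by simp
      qed
    qed
  next
    case False
    show ?thesis
    proof (cases "x'' = x")
      case True
      have z0S: "z0 \<in> S3" using G2 x False True by (simp add: z0_def)
      have "dcoef z0 x'' * dcoef z0 x = (1::'k)" using sq[OF lx False] True by (simp add: z0_def)
      then show ?thesis unfolding T1 T2 using False True z0S by simp
    next
      case ne: False
      have "\<not> (\<not> x'' ! l x'' \<and> z0 \<in> S3 \<and> dcoef z0 x \<noteq> (0::'k))"
      proof
        assume h: "\<not> x'' ! l x'' \<and> z0 \<in> S3 \<and> dcoef z0 x \<noteq> (0::'k)"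
        then obtain q where q: "q < length x" "\<not> x ! q" "z0 = x[q:=True]" using dcoef_nz by blast
        have "tp x'' \<subseteq> tp z0" using lx2 by (auto simp: z0_def tp_upd)
        then have "tp x'' \<inter> tp z0 \<noteq> {}" using ne2 x2 by auto
        then have a1: "l z0 = l x''" using G4 h x2 by blast
        have "tp x \<subseteq> tp z0" using q by (auto simp: tp_upd)
        then have "tp x \<inter> tp z0 \<noteq> {}" using ne2 x by auto
        then have a2: "l z0 = l x" using G4 h x by blast
        have "z0 ! l x" using a1 a2 lx2 by (simp add: z0_def)
        then have ql: "q = l x" using q False by (metis nth_list_update)
        have l2: "l x'' = l x" using a1 a2 by simp
        have "x = z0[l x := False]" using q ql False by (simp add: upd_F_id)
        also have "\<dots> = x''" using h l2 unfolding z0_def by (simp add: upd_F_id)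
        finally show False using ne by simp
      qed
      then have "(if \<not> x'' ! l x'' \<and> z0 \<in> S3 then dcoef z0 x'' * dcoef z0 x else (0::'k)) = 0" by auto
      then show ?thesis unfolding T1 T2 using False ne by simp
    qed
  qed
qed


lemma tp_take: "tp (take k w) = {p \<in> tp w. p < k}"
  by (auto simp: tp_def)
lemma tp_drop: "tp (drop k w) = {q. k + q \<in> tp w}"
  by (auto simp: tp_def)

definition validS :: "int \<Rightarrow> nat \<Rightarrow> nat set \<Rightarrow> bool" where
  "validS c kk S = (if S = {} then int kk \<le> c else int (Min S) \<le> c)"
definition FFS :: "nat \<Rightarrow> int \<Rightarrow> nat \<Rightarrow> nat set \<Rightarrow> int" where
  "FFS tt c kk S = (if S = {} then c - int kk else int tt - int kk + 1 + int (Max S))"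

definition Ls :: "nat \<Rightarrow> bool list \<Rightarrow> nat set" where "Ls k1 w = {p \<in> tp w. p < k1}"
definition Rs :: "nat \<Rightarrow> bool list \<Rightarrow> nat set" where "Rs k1 w = {q. k1 + q \<in> tp w}"

lemma finite_Ls[simp]: "finite (Ls k1 w)" by (simp add: Ls_def)
lemma finite_Rs[simp]: "finite (Rs k1 w)"
proof -
  have "Rs k1 w \<subseteq> (\<lambda>p. p - k1) ` tp w" by (force simp: Rs_def)
  then show ?thesis by (rule finite_subset) simp
qed

lemma PR_sets: "length w = k1 + k2 \<Longrightarrow> PR t E k1 a w \<longleftrightarrow> nonneg a \<and>
   validS (fst (ptrunc t a)) k1 (Ls k1 w) \<and> validS (snd (ptrunc t a)) k2 (Rs k1 w) \<and>
   in_quot E (FFS (fst t) (fst (ptrunc t a)) k1 (Ls k1 w), FFS (snd t) (snd (ptrunc t a)) k2 (Rs k1 w))"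
proof -
  assume l: "length w = k1 + k2"
  have a: "tp (take k1 w) = Ls k1 w" "tp (drop k1 w) = Rs k1 w" by (simp_all add: tp_take tp_drop Ls_def Rs_def)
  have b: "length (take k1 w) = k1" "length (drop k1 w) = k2" using l by simp_all
  show ?thesis unfolding PR_def valid_def FF_def a b validS_def FFS_def ..
qed

lemma Ls_upd: "p < length w \<Longrightarrow> Ls k1 (w[p:=b]) = (if p < k1 then (if b then insert p (Ls k1 w) else Ls k1 w - {p}) else Ls k1 w)"
  by (auto simp: Ls_def tp_upd)
lemma Rs_upd: "p < length w \<Longrightarrow> Rs k1 (w[p:=b]) = (if p < k1 then Rs k1 w else (if b then insert (p - k1) (Rs k1 w) else Rs k1 w - {p - k1}))"
  by (auto simp: Rs_def tp_upd)

lemma tp_split: "tp w = Ls k1 w \<union> (\<lambda>q. k1 + q) ` Rs k1 w"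
proof (rule Set.set_eqI)
  fix x
  show "x \<in> tp w \<longleftrightarrow> x \<in> Ls k1 w \<union> (\<lambda>q. k1 + q) ` Rs k1 w"
  proof (cases "x < k1")
    case True then show ?thesis by (auto simp: Ls_def Rs_def)
  next
    case False
    then have e: "x = k1 + (x - k1)" by simp
    show ?thesis
    proof
      assume "x \<in> tp w" then have "x - k1 \<in> Rs k1 w" using e by (simp add: Rs_def)
      then show "x \<in> Ls k1 w \<union> (\<lambda>q. k1 + q) ` Rs k1 w" using e by blast
    next
      assume "x \<in> Ls k1 w \<union> (\<lambda>q. k1 + q) ` Rs k1 w"
      then show "x \<in> tp w" using False by (auto simp: Ls_def Rs_def)
    qed
  qed
qed

lemma cnt_split: "cnt w = card (Ls k1 w) + card (Rs k1 w)"
proof -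
  have "Ls k1 w \<inter> (\<lambda>q. k1 + q) ` Rs k1 w = {}" by (auto simp: Ls_def)
  then have "card (tp w) = card (Ls k1 w) + card ((\<lambda>q. k1 + q) ` Rs k1 w)"
    by (subst tp_split[of w k1]) (simp add: card_Un_disjoint)
  then show ?thesis by (simp add: cnt_def card_image)
qed

lemma in_quot_down:
  assumes E: "monomial_ideal_exps E" and q: "in_quot E q" and "0 \<le> fst r" "0 \<le> snd r" "fst r \<le> fst q" "snd r \<le> snd q"
  shows "in_quot E r"
proof -
  have "(nat (fst r), nat (snd r)) \<notin> E"
  proof
    assume "(nat (fst r), nat (snd r)) \<in> E"
    moreover have "le2 (nat (fst r), nat (snd r)) (nat (fst q), nat (snd q))"
      using assms by (auto simp: le2_def)
    ultimately have "(nat (fst q), nat (snd q)) \<in> E" using E by (auto simp: monomial_ideal_exps_def)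
    then show False using q by (simp add: in_quot_def)
  qed
  then show ?thesis using assms by (simp add: in_quot_def)
qed


lemma sum_flip_down:
  assumes fin: "finite S2" and len: "\<forall>x\<in>S2. length x = length z"
  shows "(\<Sum>x\<in>S2. dcoef z x) = (\<Sum>p \<in> {p \<in> tp z. z[p:=False] \<in> S2}. - ((-1) ^ card {q \<in> tp z. p < q}) :: 'k::comm_ring_1)"
proof -
  let ?P = "{p \<in> tp z. z[p:=False] \<in> S2}"
  let ?f = "\<lambda>p. z[p:=False]"
  have inj: "inj_on ?f ?P"
  proof (rule inj_onI)
    fix p p' assume p: "p \<in> ?P" and p': "p' \<in> ?P" and e: "z[p:=False] = z[p':=False]"
    show "p = p'"
    proof (rule ccontr)
      assume ne: "p \<noteq> p'"
      have "z[p:=False] ! p = False" using p by (simp add: tp_def)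
      moreover have "z[p':=False] ! p = True" using p ne by (simp add: tp_def)
      ultimately show False using e by simp
    qed
  qed
  have dz: "\<And>p. p \<in> ?P \<Longrightarrow> dcoef z (z[p:=False]) = (- ((-1) ^ card {q \<in> tp z. p < q}) :: 'k)"
  proof -
    fix p assume p: "p \<in> ?P"
    then have pl: "p < length z" and zp: "z ! p" by (auto simp: tp_def)
    have "z = (z[p:=False])[p:=True]" using zp by (simp add: upd_T_id)
    then have "dcoef z (z[p:=False]) = (sg (z[p:=False]) p :: 'k)"
      using dcoef_flip[of p "z[p:=False]"] pl by simp
    moreover have "{q \<in> tp (z[p:=False]). p < q} = {q \<in> tp z. p < q}" using pl by (auto simp: tp_upd)
    ultimately show "dcoef z (z[p:=False]) = (- ((-1) ^ card {q \<in> tp z. p < q}) :: 'k)" by (simp add: sg_def)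
  qed
  have "(\<Sum>x\<in>S2. dcoef z x) = (\<Sum>x\<in>?f ` ?P. dcoef z x :: 'k)"
  proof (rule sum.mono_neutral_right[OF fin])
    show "?f ` ?P \<subseteq> S2" by auto
    show "\<forall>x\<in>S2 - ?f ` ?P. dcoef z x = (0::'k)"
    proof
      fix x assume x: "x \<in> S2 - ?f ` ?P"
      show "dcoef z x = (0::'k)"
      proof (rule ccontr)
        assume "dcoef z x \<noteq> (0::'k)"
        then obtain p where p: "p < length x" "\<not> x ! p" "z = x[p:=True]" using dcoef_nz by blast
        have "z[p:=False] = x" using p by (simp add: upd_F_id)
        moreover have "p \<in> tp z" using p by (simp add: tp_def)
        ultimately have "x \<in> ?f ` ?P" using x by force
        then show False using x by blast
      qed
    qed
  qed
  also have "\<dots> = (\<Sum>p\<in>?P. dcoef z (z[p:=False]))" by (rule sum.reindex[OF inj, unfolded o_def])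
  also have "\<dots> = (\<Sum>p\<in>?P. - ((-1) ^ card {q \<in> tp z. p < q}))" by (rule sum.cong) (auto simp: dz)
  finally show ?thesis .
qed

lemma sum_two_consec:
  assumes "p1 < (p2::nat)" "{q \<in> T. p1 < q} = insert p2 {q \<in> T. p2 < q}" "finite T"
  shows "(\<Sum>p\<in>{p1,p2}. - ((-1) ^ card {q \<in> T. p < q})) = (0::'k::comm_ring_1)"
proof -
  have "p2 \<notin> {q \<in> T. p2 < q}" by simp
  then have "card {q \<in> T. p1 < q} = Suc (card {q \<in> T. p2 < q})" using assms(2,3) by simp
  then show ?thesis using assms(1) by simp
qed


lemma Ls_sub: "Ls k1 w \<subseteq> {..<k1}" by (auto simp: Ls_def)
lemma Rs_lt: "length w = k1 + k2 \<Longrightarrow> q \<in> Rs k1 w \<Longrightarrow> q < k2" by (auto simp: Rs_def tp_def)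

lemma Min_lt: "finite S \<Longrightarrow> S \<noteq> {} \<Longrightarrow> (\<forall>x\<in>S. x < b) \<Longrightarrow> Min S < (b::nat)"
  using Min_in by blast

context
  fixes t :: "nat \<times> nat" and k1 k2 :: nat and E :: "(nat \<times> nat) set"
  assumes hk: "1 \<le> k1" "1 \<le> k2" "k1 \<le> fst t + 1" "k2 \<le> snd t + 1"
    and E: "monomial_ideal_exps E"
begin

lemma pres0:
  assumes l: "length w = k1 + k2"
  shows "PR t E k1 (int k1 - 1, int k2 - 1) w \<longleftrightarrow> Ls k1 w \<noteq> {} \<and> Rs k1 w \<noteq> {} \<and>
    in_quot E (int (fst t) - int k1 + 1 + int (Max (Ls k1 w)), int (snd t) - int k2 + 1 + int (Max (Rs k1 w)))"
proof -
  have pt: "ptrunc t (int k1 - 1, int k2 - 1) = (int k1 - 1, int k2 - 1)" using hk by (simp add: ptrunc_def)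
  have nn: "nonneg (int k1 - 1, int k2 - 1)" using hk by (simp add: nonneg_def)
  have vL: "validS (int k1 - 1) k1 (Ls k1 w) \<longleftrightarrow> Ls k1 w \<noteq> {}"
  proof -
    have "\<forall>x\<in>Ls k1 w. x < k1" using Ls_sub[of k1 w] by auto
    then have "Ls k1 w \<noteq> {} \<Longrightarrow> Min (Ls k1 w) < k1" using Min_lt[of "Ls k1 w" k1] by auto
    then show ?thesis by (auto simp: validS_def)
  qed
  have vR: "validS (int k2 - 1) k2 (Rs k1 w) \<longleftrightarrow> Rs k1 w \<noteq> {}"
  proof -
    have "Rs k1 w \<noteq> {} \<Longrightarrow> Min (Rs k1 w) < k2" using Min_lt[of "Rs k1 w" k2] Rs_lt[OF l] by auto
    then show ?thesis by (auto simp: validS_def)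
  qed
  show ?thesis unfolding PR_sets[OF l] pt using nn vL vR by (auto simp: FFS_def)
qed

lemma LLm1_empty: "LL (k1 + k2) (PR t E k1) (-1) (int k1 - 1, int k2 - 1) = []"
proof -
  have "set (LL (k1 + k2) (PR t E k1) (-1) (int k1 - 1, int k2 - 1)) = {}"
  proof (rule ccontr)
    assume "set (LL (k1 + k2) (PR t E k1) (-1) (int k1 - 1, int k2 - 1)) \<noteq> {}"
    then obtain w where w: "length w = k1 + k2" "PR t E k1 (int k1 - 1, int k2 - 1) w" "cnt w = 1"
      by (auto simp: set_LL)
    then have "Ls k1 w \<noteq> {}" "Rs k1 w \<noteq> {}" using pres0 by auto
    then have "card (Ls k1 w) \<ge> 1" "card (Rs k1 w) \<ge> 1" by (auto simp: Suc_le_eq card_gt_0_iff)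
    then show False using w(3) cnt_split[of w k1] by simp
  qed
  then show ?thesis by simp
qed

definition x0w :: "bool list" where "x0w = map (\<lambda>i. i = 0 \<or> i = k1) [0..<k1+k2]"

lemma x0_props: "length x0w = k1 + k2" "tp x0w = {0, k1}" "Ls k1 x0w = {0}" "Rs k1 x0w = {0}"
proof -
  show l: "length x0w = k1 + k2" by (simp add: x0w_def)
  show tp: "tp x0w = {0, k1}" using hk by (auto simp: x0w_def tp_def)
  show "Ls k1 x0w = {0}" using hk by (auto simp: Ls_def tp)
  show "Rs k1 x0w = {0}" using hk by (auto simp: Rs_def tp)
qed

lemma x0_in:
  assumes T: "in_quot E (int (fst t + 1 - k1), int (snd t + 1 - k2))"
  shows "x0w \<in> set (LL (k1 + k2) (PR t E k1) (-2) (int k1 - 1, int k2 - 1))"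
proof -
  have c: "cnt x0w = 2" using x0_props hk by (simp add: cnt_def)
  have e: "int (fst t + 1 - k1) = int (fst t) - int k1 + 1" "int (snd t + 1 - k2) = int (snd t) - int k2 + 1"
    using hk by auto
  show ?thesis unfolding set_LL using pres0[OF x0_props(1)] x0_props c T[unfolded e] by simp
qed

lemma cycle0:
  assumes T: "in_quot E (int (fst t + 1 - k1), int (snd t + 1 - k2))"
    and z: "z \<in> set (LL (k1 + k2) (PR t E k1) (-3) (int k1 - 1, int k2 - 1))"
  shows "(\<Sum>x\<in>set (LL (k1 + k2) (PR t E k1) (-2) (int k1 - 1, int k2 - 1)). dcoef z x) = (0::'k::comm_ring_1)"
proof -
  let ?a = "(int k1 - 1, int k2 - 1)"
  let ?S2 = "set (LL (k1 + k2) (PR t E k1) (-2) ?a)"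
  have zl: "length z = k1 + k2" and zp: "PR t E k1 ?a z" and zc: "cnt z = 3" using z by (auto simp: set_LL)
  have zA: "Ls k1 z \<noteq> {}" and zB: "Rs k1 z \<noteq> {}"
    and zq: "in_quot E (int (fst t) - int k1 + 1 + int (Max (Ls k1 z)), int (snd t) - int k2 + 1 + int (Max (Rs k1 z)))"
    using pres0[OF zl] zp by auto
  have e: "int (fst t + 1 - k1) = int (fst t) - int k1 + 1" "int (snd t + 1 - k2) = int (snd t) - int k2 + 1"
    using hk by auto
  have red: "\<And>p. p \<in> tp z \<Longrightarrow> z[p:=False] \<in> ?S2 \<longleftrightarrow> Ls k1 (z[p:=False]) \<noteq> {} \<and> Rs k1 (z[p:=False]) \<noteq> {}"
  proof -
    fix p assume p: "p \<in> tp z"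
    then have pl: "p < length z" by (simp add: tp_def)
    let ?y = "z[p:=False]"
    have yl: "length ?y = k1 + k2" using zl by simp
    have yc: "cnt ?y = 2" using p zc pl by (simp add: cnt_def tp_upd)
    have subL: "Ls k1 ?y \<subseteq> Ls k1 z" and subR: "Rs k1 ?y \<subseteq> Rs k1 z" using pl by (auto simp: Ls_upd Rs_upd)
    show "?y \<in> ?S2 \<longleftrightarrow> Ls k1 ?y \<noteq> {} \<and> Rs k1 ?y \<noteq> {}"
    proof
      assume "?y \<in> ?S2" then show "Ls k1 ?y \<noteq> {} \<and> Rs k1 ?y \<noteq> {}" using pres0[OF yl] by (auto simp: set_LL)
    next
      assume ne: "Ls k1 ?y \<noteq> {} \<and> Rs k1 ?y \<noteq> {}"
      have m1: "Max (Ls k1 ?y) \<le> Max (Ls k1 z)" using Max_mono[OF subL] ne by simp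
      have m2: "Max (Rs k1 ?y) \<le> Max (Rs k1 z)" using Max_mono[OF subR] ne by simp
      have "in_quot E (int (fst t) - int k1 + 1 + int (Max (Ls k1 ?y)), int (snd t) - int k2 + 1 + int (Max (Rs k1 ?y)))"
        by (rule in_quot_between[OF E T zq]) (use m1 m2 e in auto)
      then show "?y \<in> ?S2" using pres0[OF yl] ne yc yl by (simp add: set_LL)
    qed
  qed
  have fin: "finite ?S2" by simp
  have lens: "\<forall>x\<in>?S2. length x = length z" using zl by (auto simp: set_LL)
  have cardAB: "card (Ls k1 z) + card (Rs k1 z) = 3" using zc cnt_split[of z k1] by simp
  have tpz: "tp z = Ls k1 z \<union> (\<lambda>q. k1 + q) ` Rs k1 z" by (rule tp_split)
  obtain p1 p2 where p12: "p1 < p2" "{p \<in> tp z. z[p:=False] \<in> ?S2} = {p1, p2}"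
      "{q \<in> tp z. p1 < q} = insert p2 {q \<in> tp z. p2 < q}"
  proof (cases "card (Ls k1 z) \<ge> 2")
    case True
    have "card (Rs k1 z) > 0" using zB by (simp add: card_gt_0_iff)
    then have cA: "card (Ls k1 z) = 2" and cB: "card (Rs k1 z) = 1" using cardAB True by arith+
    from cA obtain x y where xy: "Ls k1 z = {x, y}" "x \<noteq> y" unfolding card_2_iff by blast
    obtain r where r: "Rs k1 z = {r}" by (rule card_1_singletonE[OF cB])
    define p1 where "p1 = min x y"
    define p2 where "p2 = max x y"
    have A1: "{p1, p2} = {x, y}" unfolding p1_def p2_def by (auto simp: min_def max_def)
    have A: "Ls k1 z = {p1, p2}" "p1 < p2" using xy A1 by (auto simp: p1_def p2_def min_def max_def)
    have "p1 \<in> Ls k1 z" "p2 \<in> Ls k1 z" using A by auto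
    then have lt: "p1 < k1" "p2 < k1" by (auto simp: Ls_def)
    have tz: "tp z = {p1, p2, k1 + r}" unfolding tpz A(1) r by auto
    have P: "{p \<in> tp z. z[p:=False] \<in> ?S2} = {p1, p2}"
    proof (rule Set.set_eqI)
      fix p
      show "p \<in> {p \<in> tp z. z[p:=False] \<in> ?S2} \<longleftrightarrow> p \<in> {p1, p2}"
      proof (cases "p \<in> tp z")
        case False then show ?thesis using tz by auto
      next
        case True
        then have pl: "p < length z" by (simp add: tp_def)
        show ?thesis
        proof (cases "p < k1")
          case True
          then have "p \<in> {p1, p2}" using \<open>p \<in> tp z\<close> tz by auto
          moreover have "Ls k1 (z[p:=False]) \<noteq> {}" using True pl A \<open>p \<in> {p1,p2}\<close> by (auto simp: Ls_upd)
          moreover have "Rs k1 (z[p:=False]) \<noteq> {}" using True pl r by (auto simp: Rs_upd)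
          ultimately show ?thesis using red[OF \<open>p \<in> tp z\<close>] \<open>p \<in> tp z\<close> by auto
        next
          case False
          then have "p = k1 + r" using \<open>p \<in> tp z\<close> tz lt by auto
          then have "Rs k1 (z[p:=False]) = {}" using pl r by (auto simp: Rs_upd)
          then show ?thesis using red[OF \<open>p \<in> tp z\<close>] False lt by auto
        qed
      qed
    qed
    have "{q \<in> tp z. p1 < q} = insert p2 {q \<in> tp z. p2 < q}" using tz A lt by auto
    then show ?thesis using that A P by blast
  next
    case False
    have "card (Ls k1 z) > 0" using zA by (simp add: card_gt_0_iff)
    then have cA: "card (Ls k1 z) = 1" and cB: "card (Rs k1 z) = 2" using cardAB False by arith+
    from cB obtain x y where xy: "Rs k1 z = {x, y}" "x \<noteq> y" unfolding card_2_iff by blast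
    obtain s where s: "Ls k1 z = {s}" by (rule card_1_singletonE[OF cA])
    define r1 where "r1 = min x y"
    define r2 where "r2 = max x y"
    have B1: "{r1, r2} = {x, y}" unfolding r1_def r2_def by (auto simp: min_def max_def)
    have B: "Rs k1 z = {r1, r2}" "r1 < r2" using xy B1 by (auto simp: r1_def r2_def min_def max_def)
    have "s \<in> Ls k1 z" using s by auto
    then have sl: "s < k1" by (auto simp: Ls_def)
    have tz: "tp z = {s, k1 + r1, k1 + r2}" unfolding tpz B(1) s by auto
    have P: "{p \<in> tp z. z[p:=False] \<in> ?S2} = {k1 + r1, k1 + r2}"
    proof (rule Set.set_eqI)
      fix p
      show "p \<in> {p \<in> tp z. z[p:=False] \<in> ?S2} \<longleftrightarrow> p \<in> {k1 + r1, k1 + r2}"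
      proof (cases "p \<in> tp z")
        case False then show ?thesis using tz by auto
      next
        case True
        then have pl: "p < length z" by (simp add: tp_def)
        show ?thesis
        proof (cases "p < k1")
          case True
          then have "p = s" using \<open>p \<in> tp z\<close> tz by auto
          then have "Ls k1 (z[p:=False]) = {}" using True pl s by (auto simp: Ls_upd)
          then show ?thesis using red[OF \<open>p \<in> tp z\<close>] True by auto
        next
          case False
          then have pr: "p \<in> {k1 + r1, k1 + r2}" using \<open>p \<in> tp z\<close> tz sl by auto
          have "Rs k1 (z[p:=False]) \<noteq> {}" using False pl B pr by (auto simp: Rs_upd)
          moreover have "Ls k1 (z[p:=False]) \<noteq> {}" using False pl s by (auto simp: Ls_upd)
          ultimately show ?thesis using red[OF \<open>p \<in> tp z\<close>] \<open>p \<in> tp z\<close> pr by auto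
        qed
      qed
    qed
    have "{q \<in> tp z. k1 + r1 < q} = insert (k1 + r2) {q \<in> tp z. k1 + r2 < q}" using tz B sl by auto
    then show ?thesis using that[of "k1 + r1" "k1 + r2"] B P by simp
  qed
  have "(\<Sum>x\<in>?S2. dcoef z x) = (\<Sum>p \<in> {p \<in> tp z. z[p:=False] \<in> ?S2}. - ((-1) ^ card {q \<in> tp z. p < q}) :: 'k)"
    by (rule sum_flip_down[OF fin lens])
  also have "\<dots> = 0" unfolding p12(2) by (rule sum_two_consec[OF p12(1) p12(3)]) simp
  finally show ?thesis .
qed

lemma part1:
  assumes T: "in_quot E (int (fst t + 1 - k1), int (snd t + 1 - k2))"
  shows "\<not> homology_zero (cm (k1 + k2) (PR t E k1) :: 'k::field gcx) (-2)"
proof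
  assume hz: "homology_zero (cm (k1 + k2) (PR t E k1) :: 'k gcx) (-2)"
  let ?a = "(int k1 - 1, int k2 - 1)"
  let ?L = "\<lambda>m. LL (k1 + k2) (PR t E k1) m ?a"
  have e1: "(-2::int) - 1 = -3" "(-2::int) + 1 = -1" by simp_all
  have "\<not> (\<forall>v \<in> carrier_vec (length (?L (-2))). mk dcoef (?L (-3)) (?L (-2)) *\<^sub>v v = 0\<^sub>v (length (?L (-3))) \<longrightarrow>
            (\<exists>w\<in>carrier_vec (length (?L (-1))). v = mk dcoef (?L (-2)) (?L (-1)) *\<^sub>v (w :: 'k vec)))"
  proof (rule not_exact)
    show "distinct (?L (-2))" by simp
    show "?L (-1) = []" by (rule LLm1_empty)
    show "?L (-2) \<noteq> []" using x0_in[OF T] by auto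
    show "\<And>z. z \<in> set (?L (-3)) \<Longrightarrow> (\<Sum>x\<in>set (?L (-2)). dcoef z x) = (0::'k)"
      by (rule cycle0[OF T])
  qed
  moreover have "\<forall>v \<in> carrier_vec (length (?L (-2))). mk dcoef (?L (-3)) (?L (-2)) *\<^sub>v v = 0\<^sub>v (length (?L (-3))) \<longrightarrow>
            (\<exists>w\<in>carrier_vec (length (?L (-1))). v = mk dcoef (?L (-2)) (?L (-1)) *\<^sub>v (w :: 'k vec))"
  proof (intro ballI impI)
    fix v :: "'k vec" assume v: "v \<in> carrier_vec (length (?L (-2)))"
      and k: "mk dcoef (?L (-3)) (?L (-2)) *\<^sub>v v = 0\<^sub>v (length (?L (-3)))"
    have k': "mk dcoef (?L (-2 - 1)) (?L (-2)) *\<^sub>v v = 0\<^sub>v (length (?L (-2 - 1)))" using k by simp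
    from hz_cm_D[OF hz v k'] obtain w where "w \<in> carrier_vec (length (?L (-2 + 1)))"
      "v = mk dcoef (?L (-2)) (?L (-2 + 1)) *\<^sub>v w" by blast
    then show "\<exists>w\<in>carrier_vec (length (?L (-1))). v = mk dcoef (?L (-2)) (?L (-1)) *\<^sub>v (w :: 'k vec)"
      by auto
  qed
  ultimately show False by (rule notE)
qed

end


lemma fam_a:
  fixes F :: "nat set"
  assumes fin: "finite F" and ne: "F \<noteq> {}" and bnd: "\<forall>x\<in>F. x < K" and q: "Q (Max F)"
  shows "Max F \<le> Max {j. j < K \<and> Q j}" "Max {j. j < K \<and> Q j} < K" "Q (Max {j. j < K \<and> Q j})"
proof -
  have mF: "Max F \<in> {j. j < K \<and> Q j}" using Max_in[OF fin ne] bnd q by auto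
  have finJ: "finite {j. j < K \<and> Q j}" by simp
  have neJ: "{j. j < K \<and> Q j} \<noteq> {}" using mF by blast
  show "Max F \<le> Max {j. j < K \<and> Q j}" using Max_ge[OF finJ mF] .
  have "Max {j. j < K \<and> Q j} \<in> {j. j < K \<and> Q j}" using Max_in[OF finJ neJ] .
  then show "Max {j. j < K \<and> Q j} < K" "Q (Max {j. j < K \<and> Q j})" by auto
qed

lemma card2_remove_max:
  fixes F :: "nat set"
  assumes "card F = 2" "J \<in> F" "Max F \<le> J"
  shows "F - {J} \<noteq> {}" "Min (F - {J}) = Min F" "Max (F - {J}) \<le> Max F"
proof -
  obtain x y where xy: "F = {x, y}" "x \<noteq> y" using assms(1) unfolding card_2_iff by blast
  have fin: "finite F" using xy by simp
  have JM: "J = Max F" using assms(2,3) Max_ge[OF fin assms(2)] by simp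
  show ne: "F - {J} \<noteq> {}" using xy by auto
  show "Max (F - {J}) \<le> Max F" using Max_mono[of "F - {J}" F] ne fin by auto
  have "Min F \<noteq> J"
  proof
    assume "Min F = J"
    then have "Min F = Max F" using JM by simp
    then show False using xy by (auto simp: min_def max_def split: if_splits)
  qed
  then have mi: "Min F \<in> F - {J}" using Min_in[OF fin] xy by auto
  show "Min (F - {J}) = Min F"
  proof (rule antisym)
    show "Min (F - {J}) \<le> Min F" using Min_le[of "F - {J}" "Min F"] mi fin by auto
    show "Min F \<le> Min (F - {J})" using Min_antimono[of "F - {J}" F] ne fin by auto
  qed
qed

lemma insert_big:
  fixes F :: "nat set"
  assumes "finite F" "F \<noteq> {}" "Max F \<le> J"
  shows "Max (insert J F) = J" "Min (insert J F) \<le> Min F"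
  using assms by (simp_all add: Max_insert Min_insert)

context
  fixes t :: "nat \<times> nat" and k1 k2 :: nat and E :: "(nat \<times> nat) set"
  assumes hk: "1 \<le> k1" "1 \<le> k2" "k1 \<le> fst t + 1" "k2 \<le> snd t + 1"
    and E: "monomial_ideal_exps E"
    and nT: "\<not> in_quot E (int (fst t + 1 - k1), int (snd t + 1 - k2))"
begin

definition QL :: "mdeg \<Rightarrow> nat \<Rightarrow> bool" where
  "QL a j = in_quot E (int (fst t) - int k1 + 1 + int j, snd (ptrunc t a) - int k2)"
definition QR :: "mdeg \<Rightarrow> nat \<Rightarrow> bool" where
  "QR a j = in_quot E (fst (ptrunc t a) - int k1, int (snd t) - int k2 + 1 + int j)"
definition JL :: "mdeg \<Rightarrow> nat" where "JL a = Max {j. j < k1 \<and> QL a j}"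
definition JR :: "mdeg \<Rightarrow> nat" where "JR a = Max {j. j < k2 \<and> QR a j}"
definition ell :: "mdeg \<Rightarrow> bool list \<Rightarrow> nat" where
  "ell a w = (if Ls k1 w \<noteq> {} then JL a else k1 + JR a)"

lemma QL_down: assumes "QL a j" "j' \<le> j" shows "QL a j'"
proof -
  have q: "in_quot E (int (fst t) - int k1 + 1 + int j, snd (ptrunc t a) - int k2)" using assms(1) by (simp add: QL_def)
  show ?thesis unfolding QL_def by (rule in_quot_down[OF E q]) (use assms(2) hk q in \<open>auto simp: in_quot_def\<close>)
qed
lemma QR_down: assumes "QR a j" "j' \<le> j" shows "QR a j'"
proof -
  have q: "in_quot E (fst (ptrunc t a) - int k1, int (snd t) - int k2 + 1 + int j)" using assms(1) by (simp add: QR_def)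
  show ?thesis unfolding QR_def by (rule in_quot_down[OF E q]) (use assms(2) hk q in \<open>auto simp: in_quot_def\<close>)
qed

lemma pres_one:
  assumes l: "length w = k1 + k2" and p: "PR t E k1 a w"
  shows "Ls k1 w = {} \<or> Rs k1 w = {}"
proof (rule ccontr)
  assume "\<not> (Ls k1 w = {} \<or> Rs k1 w = {})"
  then have ne: "Ls k1 w \<noteq> {}" "Rs k1 w \<noteq> {}" by auto
  have q: "in_quot E (int (fst t) - int k1 + 1 + int (Max (Ls k1 w)), int (snd t) - int k2 + 1 + int (Max (Rs k1 w)))"
    using p ne unfolding PR_sets[OF l] by (simp add: FFS_def)
  have "in_quot E (int (fst t + 1 - k1), int (snd t + 1 - k2))"
    by (rule in_quot_down[OF E q]) (use hk in auto)
  then show False using nT by simp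
qed

lemma presL:
  assumes l: "length w = k1 + k2" and r: "Rs k1 w = {}" and ne: "Ls k1 w \<noteq> {}"
  shows "PR t E k1 a w \<longleftrightarrow> nonneg a \<and> int (Min (Ls k1 w)) \<le> fst (ptrunc t a) \<and> int k2 \<le> snd (ptrunc t a) \<and> QL a (Max (Ls k1 w))"
  unfolding PR_sets[OF l] using r ne by (simp add: validS_def FFS_def QL_def)

lemma presR:
  assumes l: "length w = k1 + k2" and r: "Ls k1 w = {}" and ne: "Rs k1 w \<noteq> {}"
  shows "PR t E k1 a w \<longleftrightarrow> nonneg a \<and> int k1 \<le> fst (ptrunc t a) \<and> int (Min (Rs k1 w)) \<le> snd (ptrunc t a) \<and> QR a (Max (Rs k1 w))"
  unfolding PR_sets[OF l] using r ne by (simp add: validS_def FFS_def QR_def)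

abbreviation SS :: "int \<Rightarrow> mdeg \<Rightarrow> bool list set" where
  "SS m a \<equiv> set (LL (k1 + k2) (PR t E k1) m a)"

lemma SS_iff: "w \<in> SS m a \<longleftrightarrow> length w = k1 + k2 \<and> PR t E k1 a w \<and> - int (cnt w) = m"
  by (simp add: set_LL)

lemma Ls_bnd: "\<forall>x\<in>Ls k1 w. x < k1" by (auto simp: Ls_def)
lemma Rs_bnd: "length w = k1 + k2 \<Longrightarrow> \<forall>x\<in>Rs k1 w. x < k2" by (auto simp: Rs_def tp_def)

lemma tp_ne_cnt: "cnt w > 0 \<Longrightarrow> tp w \<noteq> {}" by (auto simp: cnt_def)

lemma fam_of:
  assumes l: "length w = k1 + k2" "PR t E k1 a w" "cnt w > 0"
  shows "(Ls k1 w \<noteq> {} \<and> Rs k1 w = {}) \<or> (Ls k1 w = {} \<and> Rs k1 w \<noteq> {})"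
proof -
  have "tp w \<noteq> {}" using tp_ne_cnt assms(3) .
  then have "Ls k1 w \<noteq> {} \<or> Rs k1 w \<noteq> {}" using tp_split[of w k1] by auto
  then show ?thesis using pres_one[OF assms(1,2)] by auto
qed

end


context
  fixes t :: "nat \<times> nat" and k1 k2 :: nat and E :: "(nat \<times> nat) set"
  assumes hk: "1 \<le> k1" "1 \<le> k2" "k1 \<le> fst t + 1" "k2 \<le> snd t + 1"
    and E: "monomial_ideal_exps E"
    and nT: "\<not> in_quot E (int (fst t + 1 - k1), int (snd t + 1 - k2))"
begin

lemmas ctx = hk E nT

lemma fam_L_facts:
  assumes x: "x \<in> SS t k1 k2 E m a" and m: "m < 0" and ne: "Ls k1 x \<noteq> {}"
  shows "Rs k1 x = {}" "ell t k1 k2 E a x = JL t k1 k2 E a" "Max (Ls k1 x) \<le> JL t k1 k2 E a"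
    "JL t k1 k2 E a < k1" "QL t k1 k2 E a (JL t k1 k2 E a)"
    "nonneg a" "int (Min (Ls k1 x)) \<le> fst (ptrunc t a)" "int k2 \<le> snd (ptrunc t a)"
    "QL t k1 k2 E a (Max (Ls k1 x))" "length x = k1 + k2" "- int (cnt x) = m"
proof -
  have l: "length x = k1 + k2" and p: "PR t E k1 a x" and c: "- int (cnt x) = m"
    using x by (auto simp: SS_iff[OF ctx])
  show "length x = k1 + k2" "- int (cnt x) = m" using l c .
  show r: "Rs k1 x = {}" using pres_one[OF ctx l p] ne by auto
  show "ell t k1 k2 E a x = JL t k1 k2 E a" using ne by (simp add: ell_def[OF ctx])
  have pr: "nonneg a \<and> int (Min (Ls k1 x)) \<le> fst (ptrunc t a) \<and> int k2 \<le> snd (ptrunc t a) \<and> QL t k1 k2 E a (Max (Ls k1 x))"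
    using presL[OF ctx l r ne] p by simp
  then show "nonneg a" "int (Min (Ls k1 x)) \<le> fst (ptrunc t a)" "int k2 \<le> snd (ptrunc t a)"
    "QL t k1 k2 E a (Max (Ls k1 x))" by auto
  have fa: "Max (Ls k1 x) \<le> Max {j. j < k1 \<and> QL t k1 k2 E a j}" "Max {j. j < k1 \<and> QL t k1 k2 E a j} < k1"
    "QL t k1 k2 E a (Max {j. j < k1 \<and> QL t k1 k2 E a j})"
    using fam_a[of "Ls k1 x" k1 "QL t k1 k2 E a"] ne pr Ls_bnd[OF ctx] by auto
  then show "Max (Ls k1 x) \<le> JL t k1 k2 E a" "JL t k1 k2 E a < k1" "QL t k1 k2 E a (JL t k1 k2 E a)"
    by (simp_all add: JL_def[OF ctx])
qed

lemma fam_R_facts: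
  assumes x: "x \<in> SS t k1 k2 E m a" and m: "m < 0" and ne: "Ls k1 x = {}"
  shows "Rs k1 x \<noteq> {}" "ell t k1 k2 E a x = k1 + JR t k1 k2 E a" "Max (Rs k1 x) \<le> JR t k1 k2 E a"
    "JR t k1 k2 E a < k2" "QR t k1 k2 E a (JR t k1 k2 E a)"
    "nonneg a" "int k1 \<le> fst (ptrunc t a)" "int (Min (Rs k1 x)) \<le> snd (ptrunc t a)"
    "QR t k1 k2 E a (Max (Rs k1 x))" "length x = k1 + k2" "- int (cnt x) = m"
proof -
  have l: "length x = k1 + k2" and p: "PR t E k1 a x" and c: "- int (cnt x) = m"
    using x by (auto simp: SS_iff[OF ctx])
  show "length x = k1 + k2" "- int (cnt x) = m" using l c .
  have "cnt x > 0" using c m by simp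
  then show r: "Rs k1 x \<noteq> {}" using fam_of[OF ctx l p] ne by auto
  show "ell t k1 k2 E a x = k1 + JR t k1 k2 E a" using ne by (simp add: ell_def[OF ctx])
  have pr: "nonneg a \<and> int k1 \<le> fst (ptrunc t a) \<and> int (Min (Rs k1 x)) \<le> snd (ptrunc t a) \<and> QR t k1 k2 E a (Max (Rs k1 x))"
    using presR[OF ctx l ne r] p by simp
  then show "nonneg a" "int k1 \<le> fst (ptrunc t a)" "int (Min (Rs k1 x)) \<le> snd (ptrunc t a)"
    "QR t k1 k2 E a (Max (Rs k1 x))" by auto
  have fa: "Max (Rs k1 x) \<le> Max {j. j < k2 \<and> QR t k1 k2 E a j}" "Max {j. j < k2 \<and> QR t k1 k2 E a j} < k2"
    "QR t k1 k2 E a (Max {j. j < k2 \<and> QR t k1 k2 E a j})"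
    using fam_a[of "Rs k1 x" k2 "QR t k1 k2 E a"] r pr Rs_bnd[OF ctx l] by auto
  then show "Max (Rs k1 x) \<le> JR t k1 k2 E a" "JR t k1 k2 E a < k2" "QR t k1 k2 E a (JR t k1 k2 E a)"
    by (simp_all add: JR_def[OF ctx])
qed

lemma G0: "x \<in> SS t k1 k2 E m a \<Longrightarrow> m < 0 \<Longrightarrow> ell t k1 k2 E a x < k1 + k2"
proof -
  assume x: "x \<in> SS t k1 k2 E m a" and m: "m < 0"
  show ?thesis
  proof (cases "Ls k1 x = {}")
    case True then show ?thesis using fam_R_facts[OF x m True] by simp
  next
    case False then show ?thesis using fam_L_facts[OF x m False] by simp
  qed
qed

lemma G4: "u \<in> SS t k1 k2 E m a \<Longrightarrow> m < 0 \<Longrightarrow> v \<in> SS t k1 k2 E m' a \<Longrightarrow> m' < 0 \<Longrightarrow>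
   tp u \<inter> tp v \<noteq> {} \<Longrightarrow> ell t k1 k2 E a u = ell t k1 k2 E a v"
proof -
  assume u: "u \<in> SS t k1 k2 E m a" and m: "m < 0" and v: "v \<in> SS t k1 k2 E m' a" and m': "m' < 0"
    and i: "tp u \<inter> tp v \<noteq> {}"
  then obtain q where q: "q \<in> tp u" "q \<in> tp v" by blast
  show ?thesis
  proof (cases "q < k1")
    case True
    then have "Ls k1 u \<noteq> {}" "Ls k1 v \<noteq> {}" using q by (auto simp: Ls_def)
    then show ?thesis using fam_L_facts(2)[OF u m] fam_L_facts(2)[OF v m'] by simp
  next
    case False
    then have "q - k1 \<in> Rs k1 u" "q - k1 \<in> Rs k1 v" using q by (auto simp: Rs_def)
    then have "Ls k1 u = {}" "Ls k1 v = {}" using fam_L_facts(1)[OF u m] fam_L_facts(1)[OF v m'] by auto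
    then show ?thesis using fam_R_facts(2)[OF u m] fam_R_facts(2)[OF v m'] by simp
  qed
qed

lemma cnt_L: "Rs k1 x = {} \<Longrightarrow> cnt x = card (Ls k1 x)" using cnt_split[of x k1] by simp
lemma cnt_R: "Ls k1 x = {} \<Longrightarrow> cnt x = card (Rs k1 x)" using cnt_split[of x k1] by simp

lemma G1: assumes x: "x \<in> SS t k1 k2 E (-2) a" and xl: "x ! ell t k1 k2 E a x"
  shows "x[ell t k1 k2 E a x := False] \<in> SS t k1 k2 E (-1) a"
proof (cases "Ls k1 x = {}")
  case False
  note f = fam_L_facts[OF x _ False, simplified]
  let ?J = "JL t k1 k2 E a"
  let ?F = "Ls k1 x"
  have Jl: "?J < length x" using f hk by simp
  have JF: "?J \<in> ?F" using xl f Jl by (simp add: Ls_def tp_def)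
  have c2: "card ?F = 2" using f cnt_L[of x] by simp
  have rm: "?F - {?J} \<noteq> {}" "Min (?F - {?J}) = Min ?F" "Max (?F - {?J}) \<le> Max ?F"
    using card2_remove_max[OF c2 JF f(3)] .
  let ?y = "x[?J := False]"
  have Ly: "Ls k1 ?y = ?F - {?J}" using Jl f by (simp add: Ls_upd)
  have Ry: "Rs k1 ?y = {}" using Jl f by (simp add: Rs_upd)
  have ly: "length ?y = k1 + k2" using f by simp
  have ne': "Ls k1 ?y \<noteq> {}" using Ly rm by simp
  have "QL t k1 k2 E a (Max (Ls k1 ?y))" using QL_down[OF ctx f(9)] rm Ly by simp
  then have "PR t E k1 a ?y" unfolding presL[OF ctx ly Ry ne'] using f rm Ly by simp
  moreover have "cnt ?y = 1" using cnt_L[OF Ry] Ly c2 JF by simp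
  ultimately show ?thesis using f ly by (simp add: SS_iff[OF ctx])
next
  case True
  note f = fam_R_facts[OF x _ True, simplified]
  let ?J = "JR t k1 k2 E a"
  let ?F = "Rs k1 x"
  have Jl: "k1 + ?J < length x" using f by simp
  have JF: "?J \<in> ?F" using xl f Jl by (simp add: Rs_def tp_def)
  have c2: "card ?F = 2" using f cnt_R[OF True] by simp
  have rm: "?F - {?J} \<noteq> {}" "Min (?F - {?J}) = Min ?F" "Max (?F - {?J}) \<le> Max ?F"
    using card2_remove_max[OF c2 JF f(3)] .
  let ?y = "x[k1 + ?J := False]"
  have Ly: "Rs k1 ?y = ?F - {?J}" using Jl f by (simp add: Rs_upd)
  have Ry: "Ls k1 ?y = {}" using Jl True by (simp add: Ls_upd)
  have ly: "length ?y = k1 + k2" using f by simp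
  have ne': "Rs k1 ?y \<noteq> {}" using Ly rm by simp
  have "QR t k1 k2 E a (Max (Rs k1 ?y))" using QR_down[OF ctx f(9)] rm Ly by simp
  then have "PR t E k1 a ?y" unfolding presR[OF ctx ly Ry ne'] using f rm Ly by simp
  moreover have "cnt ?y = 1" using cnt_R[OF Ry] Ly c2 JF by simp
  ultimately show ?thesis using f ly by (simp add: SS_iff[OF ctx])
qed

lemma G2: assumes x: "x \<in> SS t k1 k2 E (-2) a" and xl: "\<not> x ! ell t k1 k2 E a x"
  shows "x[ell t k1 k2 E a x := True] \<in> SS t k1 k2 E (-3) a"
proof (cases "Ls k1 x = {}")
  case False
  note f = fam_L_facts[OF x _ False, simplified]
  let ?J = "JL t k1 k2 E a"
  let ?F = "Ls k1 x"
  have Jl: "?J < length x" using f hk by simp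
  have JF: "?J \<notin> ?F" using xl f by (simp add: Ls_def tp_def)
  have c2: "card ?F = 2" using f cnt_L[of x] by simp
  have ib: "Max (insert ?J ?F) = ?J" "Min (insert ?J ?F) \<le> Min ?F" using insert_big[of ?F ?J] False f by auto
  let ?y = "x[?J := True]"
  have Ly: "Ls k1 ?y = insert ?J ?F" using Jl f by (simp add: Ls_upd)
  have Ry: "Rs k1 ?y = {}" using Jl f by (simp add: Rs_upd)
  have ly: "length ?y = k1 + k2" using f by simp
  have ne': "Ls k1 ?y \<noteq> {}" using Ly by simp
  have "PR t E k1 a ?y" unfolding presL[OF ctx ly Ry ne'] using f ib Ly by auto
  moreover have "cnt ?y = 3" using cnt_L[OF Ry] Ly c2 JF by simp
  ultimately show ?thesis using f ly by (simp add: SS_iff[OF ctx])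
next
  case True
  note f = fam_R_facts[OF x _ True, simplified]
  let ?J = "JR t k1 k2 E a"
  let ?F = "Rs k1 x"
  have Jl: "k1 + ?J < length x" using f by simp
  have JF: "?J \<notin> ?F" using xl f by (simp add: Rs_def tp_def)
  have c2: "card ?F = 2" using f cnt_R[OF True] by simp
  have ib: "Max (insert ?J ?F) = ?J" "Min (insert ?J ?F) \<le> Min ?F" using insert_big[of ?F ?J] f by auto
  let ?y = "x[k1 + ?J := True]"
  have Ly: "Rs k1 ?y = insert ?J ?F" using Jl f by (simp add: Rs_upd)
  have Ry: "Ls k1 ?y = {}" using Jl True by (simp add: Ls_upd)
  have ly: "length ?y = k1 + k2" using f by simp
  have ne': "Rs k1 ?y \<noteq> {}" using Ly by simp
  have "PR t E k1 a ?y" unfolding presR[OF ctx ly Ry ne'] using f ib Ly by auto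
  moreover have "cnt ?y = 3" using cnt_R[OF Ry] Ly c2 JF by simp
  ultimately show ?thesis using f ly by (simp add: SS_iff[OF ctx])
qed

lemma G3: assumes x: "x \<in> SS t k1 k2 E (-2) a" and xl: "x ! ell t k1 k2 E a x"
  and p: "p < k1 + k2" "\<not> x ! p" "p \<noteq> ell t k1 k2 E a x"
  and x2: "x[ell t k1 k2 E a x := False, p := True] \<in> SS t k1 k2 E (-2) a"
  shows "p < ell t k1 k2 E a x \<and> x[p := True] \<in> SS t k1 k2 E (-3) a"
proof (cases "Ls k1 x = {}")
  case False
  note f = fam_L_facts[OF x _ False, simplified]
  let ?J = "JL t k1 k2 E a"
  let ?F = "Ls k1 x"
  have Jl: "?J < length x" using f hk by simp
  have JF: "?J \<in> ?F" using xl f Jl by (simp add: Ls_def tp_def)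
  have c2: "card ?F = 2" using f cnt_L[of x] by simp
  have rm: "?F - {?J} \<noteq> {}" using card2_remove_max[OF c2 JF f(3)] by blast
  have MJ: "Max ?F = ?J" using Max_ge[OF finite_Ls JF] f(3) by simp
  let ?y = "x[?J := False]"
  have Ly: "Ls k1 ?y = ?F - {?J}" using Jl f by (simp add: Ls_upd)
  have Ry: "Rs k1 ?y = {}" using Jl f by (simp add: Rs_upd)
  have pl: "p < length ?y" using p f by simp
  have x2': "?y[p := True] \<in> SS t k1 k2 E (-2) a" using x2 f by simp
  have pk: "p < k1"
  proof (rule ccontr)
    assume "\<not> p < k1"
    then have "Rs k1 (?y[p := True]) \<noteq> {}" "Ls k1 (?y[p := True]) \<noteq> {}" using pl Ly rm by (simp_all add: Rs_upd Ls_upd)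
    then show False using fam_L_facts(1)[OF x2' _] by auto
  qed
  have L2: "Ls k1 (?y[p := True]) = insert p (?F - {?J})" using pl pk Ly by (simp add: Ls_upd)
  have "Max (Ls k1 (?y[p := True])) \<le> ?J" using fam_L_facts(3)[OF x2' _] L2 by simp
  then have "p \<le> ?J" using L2 Max_ge[of "Ls k1 (?y[p := True])" p] by simp
  then have pJ: "p < ?J" using p f by simp
  let ?z = "x[p := True]"
  have xpl: "p < length x" using p f by simp
  have pF: "p \<notin> ?F" using p xpl by (simp add: Ls_def tp_def)
  have Lz: "Ls k1 ?z = insert p ?F" using xpl pk by (simp add: Ls_upd)
  have Rz: "Rs k1 ?z = {}" using xpl pk f by (simp add: Rs_upd)
  have lz: "length ?z = k1 + k2" using f by simp
  have ne': "Ls k1 ?z \<noteq> {}" using Lz by simp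
  have mx: "Max (insert p ?F) = Max ?F" using MJ pJ False by (simp add: Max_insert)
  have mn: "Min (insert p ?F) \<le> Min ?F" using False by (simp add: Min_insert)
  have "PR t E k1 a ?z" unfolding presL[OF ctx lz Rz ne'] using f Lz mx mn by auto
  moreover have "cnt ?z = 3" using cnt_L[OF Rz] Lz c2 pF by simp
  ultimately show ?thesis using f lz pJ by (simp add: SS_iff[OF ctx])
next
  case True
  note f = fam_R_facts[OF x _ True, simplified]
  let ?J = "JR t k1 k2 E a"
  let ?F = "Rs k1 x"
  have Jl: "k1 + ?J < length x" using f by simp
  have JF: "?J \<in> ?F" using xl f Jl by (simp add: Rs_def tp_def)
  have c2: "card ?F = 2" using f cnt_R[OF True] by simp
  have rm: "?F - {?J} \<noteq> {}" using card2_remove_max[OF c2 JF f(3)] by blast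
  have MJ: "Max ?F = ?J" using Max_ge[OF finite_Rs JF] f(3) by simp
  let ?y = "x[k1 + ?J := False]"
  have Ly: "Rs k1 ?y = ?F - {?J}" using Jl f by (simp add: Rs_upd)
  have Ry: "Ls k1 ?y = {}" using Jl True by (simp add: Ls_upd)
  have pl: "p < length ?y" using p f by simp
  have x2': "?y[p := True] \<in> SS t k1 k2 E (-2) a" using x2 f by simp
  have pk: "\<not> p < k1"
  proof
    assume "p < k1"
    then have "Rs k1 (?y[p := True]) \<noteq> {}" "Ls k1 (?y[p := True]) \<noteq> {}" using pl Ly rm by (simp_all add: Rs_upd Ls_upd)
    then show False using fam_L_facts(1)[OF x2' _] by auto
  qed
  have L2: "Rs k1 (?y[p := True]) = insert (p - k1) (?F - {?J})" using pl pk Ly by (simp add: Rs_upd)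
  have L2e: "Ls k1 (?y[p := True]) = {}" using pl pk Ry by (simp add: Ls_upd)
  have "Max (Rs k1 (?y[p := True])) \<le> ?J" using fam_R_facts(3)[OF x2' _ L2e] by simp
  then have "p - k1 \<le> ?J" using L2 Max_ge[of "Rs k1 (?y[p := True])" "p - k1"] by simp
  then have pJ: "p - k1 < ?J" using p f pk by simp
  let ?z = "x[p := True]"
  have xpl: "p < length x" using p f by simp
  have pF: "p - k1 \<notin> ?F" using p xpl pk by (simp add: Rs_def tp_def)
  have Lz: "Rs k1 ?z = insert (p - k1) ?F" using xpl pk by (simp add: Rs_upd)
  have Rz: "Ls k1 ?z = {}" using xpl pk True by (simp add: Ls_upd)
  have lz: "length ?z = k1 + k2" using f by simp
  have ne': "Rs k1 ?z \<noteq> {}" using Lz by simp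
  have fF: "?F \<noteq> {}" using JF by blast
  have mx: "Max (insert (p - k1) ?F) = Max ?F" using MJ pJ fF by (simp add: Max_insert)
  have mn: "Min (insert (p - k1) ?F) \<le> Min ?F" using fF by (simp add: Min_insert)
  have "PR t E k1 a ?z" unfolding presR[OF ctx lz Rz ne'] using f Lz mx mn by auto
  moreover have "cnt ?z = 3" using cnt_R[OF Rz] Lz c2 pF by simp
  ultimately show ?thesis using f lz pJ pk by (simp add: SS_iff[OF ctx])
qed

lemma part2: "homology_zero (cm (k1 + k2) (PR t E k1) :: 'k::field gcx) (-2)"
proof (rule hz_cm_I)
  fix a and v :: "'k vec"
  let ?L = "\<lambda>m. LL (k1 + k2) (PR t E k1) m a"
  assume v: "v \<in> carrier_vec (length (?L (-2)))"
    and ker: "mk dcoef (?L (-2 - 1)) (?L (-2)) *\<^sub>v v = 0\<^sub>v (length (?L (-2 - 1)))"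
  have e: "(-2::int) - 1 = -3" "(-2::int) + 1 = -1" by simp_all
  have ker': "mk dcoef (?L (-3)) (?L (-2)) *\<^sub>v v = 0\<^sub>v (length (?L (-3)))" using ker unfolding e .
  let ?l = "ell t k1 k2 E a"
  have "\<exists>w\<in>carrier_vec (length (?L (-1))). v = mk dcoef (?L (-2)) (?L (-1)) *\<^sub>v w"
  proof (rule homotopy_exact[where h = "Hh ?l"])
    show "distinct (?L (-1))" "distinct (?L (-2))" "distinct (?L (-3))" by simp_all
    show "v \<in> carrier_vec (length (?L (-2)))" by (rule v)
    show "mk dcoef (?L (-3)) (?L (-2)) *\<^sub>v v = 0\<^sub>v (length (?L (-3)))" by (rule ker')
    fix x'' x assume x2: "x'' \<in> set (?L (-2))" and x: "x \<in> set (?L (-2))"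
    show "(\<Sum>y\<in>set (?L (-1)). dcoef x'' y * Hh ?l y x) + (\<Sum>z\<in>set (?L (-3)). Hh ?l x'' z * dcoef z x) =
       (if x'' = x then 1 else (0::'k))"
    proof (rule homotopy_identity[where n = "k1 + k2"])
      show "finite (set (?L (-1)))" "finite (set (?L (-3)))" by simp_all
      show "\<forall>x\<in>set (?L (-1)) \<union> set (?L (-2)) \<union> set (?L (-3)). length x = k1 + k2"
        by (auto simp: SS_iff[OF ctx])
      show "\<forall>y\<in>set (?L (-1)). tp y \<noteq> {}" by (auto simp: SS_iff[OF ctx] cnt_def)
      show "\<forall>y\<in>set (?L (-2)). tp y \<noteq> {}" by (auto simp: SS_iff[OF ctx] cnt_def)
      show "\<forall>x\<in>set (?L (-2)). ?l x < k1 + k2" using G0[of _ "-2" a] by auto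
      show "\<forall>x\<in>set (?L (-3)). ?l x < k1 + k2" using G0[of _ "-3" a] by auto
      show "\<forall>x\<in>set (?L (-2)). x ! ?l x \<longrightarrow> x[?l x := False] \<in> set (?L (-1))" using G1 by blast
      show "\<forall>x\<in>set (?L (-2)). \<not> x ! ?l x \<longrightarrow> x[?l x := True] \<in> set (?L (-3))" using G2 by blast
      show "\<forall>x\<in>set (?L (-2)). \<forall>p. x ! ?l x \<longrightarrow> p < k1 + k2 \<longrightarrow> \<not> x ! p \<longrightarrow> p \<noteq> ?l x \<longrightarrow>
              x[?l x := False, p := True] \<in> set (?L (-2)) \<longrightarrow> p < ?l x \<and> x[p := True] \<in> set (?L (-3))"
        using G3 by blast
      show "\<forall>u\<in>set (?L (-1)) \<union> set (?L (-2)) \<union> set (?L (-3)). \<forall>w\<in>set (?L (-1)) \<union> set (?L (-2)) \<union> set (?L (-3)).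
              tp u \<inter> tp w \<noteq> {} \<longrightarrow> ?l u = ?l w"
      proof (intro ballI impI)
        fix u w assume u: "u \<in> set (?L (-1)) \<union> set (?L (-2)) \<union> set (?L (-3))"
          and w: "w \<in> set (?L (-1)) \<union> set (?L (-2)) \<union> set (?L (-3))" and i: "tp u \<inter> tp w \<noteq> {}"
        obtain m where m: "u \<in> set (?L m)" "m < 0" using u by auto
        obtain m' where m': "w \<in> set (?L m')" "m' < 0" using w by auto
        show "?l u = ?l w" by (rule G4[OF m(1) m(2) m'(1) m'(2) i])
      qed
      show "x'' \<in> set (?L (-2))" "x \<in> set (?L (-2))" using x2 x .
    qed
  qed
  then show "\<exists>w\<in>carrier_vec (length (?L (-2 + 1))). v = mk dcoef (?L (-2)) (?L (-2 + 1)) *\<^sub>v w"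
    unfolding e .
qed

end


theorem mainTheorem13:
  fixes t k :: "nat \<times> nat" and E :: "(nat \<times> nat) set"
  assumes "1 \<le> fst k" and "1 \<le> snd k"
    and "fst k \<le> fst t + 1" and "snd k \<le> snd t + 1"
    and "pos_t_determined_ideal t E"
  shows "cohomology_zero (nak t k (quot_cx E :: 'k::field gcx)) 2 \<longleftrightarrow>
         (\<forall>m. gdim (quot_cx E :: 'k gcx) m
                 (int (fst t + 1 - fst k), int (snd t + 1 - snd k)) = 0)"
proof -
  have E: "monomial_ideal_exps E" using assms(5) by (simp add: pos_t_determined_ideal_def)
  have nk: "nak t k (quot_cx E :: 'k gcx) = cm (fst k + snd k) (PR t E (fst k))"
    using nak_cm[OF assms(5)] assms(3,4) by simp
  have c: "cohomology_zero (nak t k (quot_cx E :: 'k gcx)) 2 \<longleftrightarrow>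
      homology_zero (cm (fst k + snd k) (PR t E (fst k)) :: 'k gcx) (-2)"
    unfolding cohomology_zero_def nk by simp
  have r: "(\<forall>m. gdim (quot_cx E :: 'k gcx) m (int (fst t + 1 - fst k), int (snd t + 1 - snd k)) = 0) \<longleftrightarrow>
      \<not> in_quot E (int (fst t + 1 - fst k), int (snd t + 1 - snd k))"
    by (auto simp: quot_cx_def qdim_def)
  show ?thesis
  proof (cases "in_quot E (int (fst t + 1 - fst k), int (snd t + 1 - snd k))")
    case True
    then show ?thesis unfolding c r using part1[OF assms(1-4) E True] by simp
  next
    case False
    then show ?thesis unfolding c r using part2[OF assms(1-4) E False] by simp
  qed
qed


end
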